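(* Let $\mathcal{P}(\mathcal{G})$ be the pdRCON model represented by the graph $\mathcal{G} = (V, E_{\mathcal{G}}, \mathbb{L}_{\mathcal{G}}, \mathbb{E}_{\mathcal{G}})$. Then the set of pdCGs representing the neighbouring submodels of $\mathcal{P}(\mathcal{G})$, that is the set of graphs $\mathcal{H}\in \mathcal{P}$ that are covered by $\mathcal{G}$ in the model inclusion order ($\mathcal{H} \prec_{s} \mathcal{G}$ with no $\mathcal{F}\in\mathcal{P}$ such that $\mathcal{H}\prec_s\mathcal{F}\prec_s\mathcal{G}$), is made up of: (a) all graphs obtained by merging exactly two vertex atomic colour classes of $\mathcal{G}$ into a vertex twin-pairing class, namely (i) $\mathcal{H}=(V, E_{\mathcal{G}},\mathbb{L}_{\mathcal{G}}\setminus \{i\}, \mathbb{E}_{\mathcal{G}})$ for all $i\in \mathbb{L}_{\mathcal{G}}$; (b) all graphs obtained by merging exactly two edge atomic colour classes of $\mathcal{G}$ into an edge twin-pairing class, namely (ii) $\mathcal{H}=(V, E_{\mathcal{G}}, \mathbb{L}_{\mathcal{G}}, \mathbb{E}_{\mathcal{G}}\setminus \{(i,j)\})$ for all $(i, j)\in \mathbb{E}_{\mathcal{G}}$; (c) all graphs obtained by removing exactly one edge atomic colour class from $\mathcal{G}$, namely (iii) $\mathcal{H}=(V, E_{\mathcal{G}}\setminus\{(i,j)\}, \mathbb{L}_{\mathcal{G}}, \mathbb{E}_{\mathcal{G}} \setminus \{(i,j)\})$ for all $(i,j)\in \mathbb{E}_{\mathcal{G}}$; (iv) $\mathcal{H}=(V,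 E_{\mathcal{G}}\setminus\{\tau(i,j)\}, \mathbb{L}_{\mathcal{G}}, \mathbb{E}_{\mathcal{G}} \setminus \{(i,j)\})$ for all $(i,j)\in \mathbb{E}_{\mathcal{G}}$; (v) $\mathcal{H}=(V, E_{\mathcal{G}}\setminus\{(i,j)\}, \mathbb{L}_{\mathcal{G}}, \mathbb{E}_{\mathcal{G}})$ for all $(i,j)\in E_{\mathcal{G}}$ such that $\tau(i,j)\not\in E_{\mathcal{G}}$; (vi) $\mathcal{H}=(V, E_{\mathcal{G}} \setminus \{(i,\tau(i))\}, \mathbb{L}_{\mathcal{G}}, \mathbb{E}_{\mathcal{G}})$ for all $i\in V$ such that $(i,\tau(i)) \in E_{\mathcal{G}}$; (d) all graphs obtained by removing exactly one edge twin-pairing colour class from $\mathcal{G}$, namely (vii) $\mathcal{H}=(V, E_{\mathcal{G}}\setminus\{(i,j), \tau(i,j)\}, \mathbb{L}_{\mathcal{G}}, \mathbb{E}_{\mathcal{G}})$ for all $(i,j), \tau(i,j) \in E_{\mathcal{G}}$ such that $(i,j)\neq \tau(i,j)$ and both $(i,j)\notin \mathbb{E}_{\mathcal{G}}$ and $\tau(i,j)\notin \mathbb{E}_{\mathcal{G}}$.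
   Context: Let $V=\{1,\dots,p\}$ and let $\tau$ be a twin-pairing function on $V$, i.e. $\tau(i)\in V$ with $\tau(\tau(i))=i$ and $\tau(i)\neq i$; it is extended to edges by $\tau(i,j)=(\tau(i),\tau(j))$ (endpoints reordered so the smaller comes first) and to sets elementwise. Fix a partition $(L,R)$ of $V$ with $\tau(L)=R$, numbered so that $L=\{1,\dots,q\}$, $R=\{q+1,\dots,p\}$. Let $F_V=\{(i,j): i,j\in V, i<j\}$, $F_L=\{(i,j)\in F_V: i<\tau(j)\}$, $F_R=\{(i,j)\in F_V: i>\tau(j)\}$. A coloured graph $\mathcal G=(\mathcal V,\mathcal E)$ consists of a partition $\mathcal V$ of $V$ into vertex colour classes and a partition $\mathcal E$ of an edge set $E\subseteq F_V$ into edge colour classes. It is a coloured graph for paired data (pdCG) if every colour class is either atomic (a single element) or twin-pairing (of the form $\{i,\tau(i)\}$ or $\{(i,j),\tau(i,j)\}$ with $(i,j)\neq\tau(i,j)$). The associated RCON model for paired data (pdRCON model) $\mathcal{P}(\mathcal G)$ is the family of Gaussian distributions whose concentration matrix has zero entries for missing edges and equal entries for vertices (diagonal entries) or edges (off-diagonal entries) in the same colour class; $\mathcal{P}$ denotes the family of all pdCGs on $V$. Every pdCG is equivalently represented by the quadruplet $(V,E,\mathbb L,\mathbb E)$ where $E$ is the union of the edge colour classes, $E_L=E\cap F_L$, $E_R=E\cap F_R$, $\mathbb L=\{i\in L:\{i\}\in\mathcal V\}$ (vertices of $L$ in atomic classes) and $\mathbb E=\{(i,j)\in E_L\cap\tau(E_R):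 \{(i,j)\}\in\mathcal E\}$ (edges of $E_L$ whose twin is present and which, with their twin, form atomic classes). The model inclusion order is $\mathcal H\preceq_s\mathcal G$ iff $\mathcal P(\mathcal H)\subseteq\mathcal P(\mathcal G)$, which holds iff the edge set of $\mathcal H$ is contained in that of $\mathcal G$, every vertex colour class of $\mathcal H$ is a union of vertex colour classes of $\mathcal G$, and every edge colour class of $\mathcal H$ is a union of edge colour classes of $\mathcal G$; $\prec_s$ is its strict version. *)

theory Defs
  imports "HOL-Library.Disjoint_Sets"
begin

(* Vertices are natural numbers, V = {1..p}; edges are pairs (i,j) with i < j.
   tau is the twin-pairing function; L = {1..q}, R = {q+1..p}. *)

type_synonym vertex = nat
type_synonym edge = "nat \<times> nat"
(* a coloured graph: (vertex colour classes, edge colour classes) *)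
type_synonym cgraph = "vertex set set \<times> edge set set"

definition pd_setup :: "nat \<Rightarrow> nat \<Rightarrow> (nat \<Rightarrow> nat) \<Rightarrow> bool" where
  "pd_setup p q \<tau> \<longleftrightarrow>
     (\<forall>i\<in>{1..p}. \<tau> i \<in> {1..p} \<and> \<tau> (\<tau> i) = i \<and> \<tau> i \<noteq> i) \<and>
     q \<le> p \<and> \<tau> ` {1..q} = {q+1..p}"

definition tau_e :: "(nat \<Rightarrow> nat) \<Rightarrow> edge \<Rightarrow> edge" where
  "tau_e \<tau> e = (min (\<tau> (fst e)) (\<tau> (snd e)), max (\<tau> (fst e)) (\<tau> (snd e)))"

definition F_V :: "nat \<Rightarrow> edge set" where
  "F_V p = {(i,j). i \<in> {1..p} \<and> j \<in> {1..p} \<and> i < j}"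

definition F_L :: "nat \<Rightarrow> (nat \<Rightarrow> nat) \<Rightarrow> edge set" where
  "F_L p \<tau> = {(i,j) \<in> F_V p. i < \<tau> j}"

definition F_R :: "nat \<Rightarrow> (nat \<Rightarrow> nat) \<Rightarrow> edge set" where
  "F_R p \<tau> = {(i,j) \<in> F_V p. i > \<tau> j}"

definition vclasses :: "cgraph \<Rightarrow> vertex set set" where
  "vclasses G = fst G"

definition eclasses :: "cgraph \<Rightarrow> edge set set" where
  "eclasses G = snd G"

definition pd_edges :: "cgraph \<Rightarrow> edge set" where
  "pd_edges G = \<Union>(eclasses G)"

definition is_pdCG :: "nat \<Rightarrow> (nat \<Rightarrow> nat) \<Rightarrow> cgraph \<Rightarrow> bool" where
  "is_pdCG p \<tau> G \<longleftrightarrow>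
     partition_on {1..p} (vclasses G) \<and>
     pd_edges G \<subseteq> F_V p \<and>
     partition_on (pd_edges G) (eclasses G) \<and>
     (\<forall>C\<in>vclasses G. (\<exists>i. C = {i}) \<or> (\<exists>i. C = {i, \<tau> i})) \<and>
     (\<forall>C\<in>eclasses G. (\<exists>e. C = {e}) \<or> (\<exists>e. C = {e, tau_e \<tau> e} \<and> e \<noteq> tau_e \<tau> e))"

definition pd_LL :: "nat \<Rightarrow> cgraph \<Rightarrow> vertex set" where
  "pd_LL q G = {i \<in> {1..q}. {i} \<in> vclasses G}"

definition pd_EE :: "nat \<Rightarrow> (nat \<Rightarrow> nat) \<Rightarrow> cgraph \<Rightarrow> edge set" where
  "pd_EE p \<tau> G =
     {e \<in> (pd_edges G \<inter> F_L p \<tau>) \<inter> tau_e \<tau> ` (pd_edges G \<inter> F_R p \<tau>). {e} \<in> eclasses G}"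

(* quadruplet representation (V is fixed and omitted): (E, \<bbbL>, \<bbbE>) *)
definition pd_quad :: "nat \<Rightarrow> nat \<Rightarrow> (nat \<Rightarrow> nat) \<Rightarrow> cgraph \<Rightarrow> edge set \<times> vertex set \<times> edge set" where
  "pd_quad p q \<tau> G = (pd_edges G, pd_LL q G, pd_EE p \<tau> G)"

(* model inclusion order H \<preceq>_s G, i.e. P(H) \<subseteq> P(G), via its combinatorial characterisation *)
definition model_le :: "cgraph \<Rightarrow> cgraph \<Rightarrow> bool" where
  "model_le H G \<longleftrightarrow>
     pd_edges H \<subseteq> pd_edges G \<and>
     (\<forall>C\<in>vclasses H. \<exists>S\<subseteq>vclasses G. C = \<Union>S) \<and>
     (\<forall>C\<in>eclasses H. \<exists>S\<subseteq>eclasses G. C = \<Union>S)"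

definition model_less :: "cgraph \<Rightarrow> cgraph \<Rightarrow> bool" where
  "model_less H G \<longleftrightarrow> model_le H G \<and> \<not> model_le G H"

definition covered_by :: "nat \<Rightarrow> (nat \<Rightarrow> nat) \<Rightarrow> cgraph \<Rightarrow> cgraph \<Rightarrow> bool" where
  "covered_by p \<tau> H G \<longleftrightarrow>
     is_pdCG p \<tau> H \<and> model_less H G \<and>
     \<not> (\<exists>F. is_pdCG p \<tau> F \<and> model_less H F \<and> model_less F G)"

end

theory Submission
  imports Defs
begin


lemma setupD:
  assumes "pd_setup p q \<tau>"
  shows "\<forall>i\<in>{1..p}. \<tau> i \<in> {1..p} \<and> \<tau> (\<tau> i) = i \<and> \<tau> i \<noteq> i" "q \<le> p" "\<tau> ` {1..q} = {q+1..p}"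
  using assms unfolding pd_setup_def by blast+

lemma tau_props:
  assumes "pd_setup p q \<tau>" "i \<in> {1..p}"
  shows "\<tau> i \<in> {1..p}" "\<tau> (\<tau> i) = i" "\<tau> i \<noteq> i"
  using setupD(1)[OF assms(1)] assms(2) by blast+

lemma tau_L:
  assumes "pd_setup p q \<tau>" "1 \<le> i" "i \<le> q"
  shows "q < \<tau> i \<and> \<tau> i \<le> p"
proof -
  have "i \<in> {1..q}" using assms by simp
  then have "\<tau> i \<in> {q+1..p}" using setupD(3)[OF assms(1)] by blast
  then show ?thesis by simp
qed

lemma tau_R:
  assumes "pd_setup p q \<tau>" "q < i" "i \<le> p"
  shows "1 \<le> \<tau> i \<and> \<tau> i \<le> q"
proof -
  have "i \<in> {q+1..p}" using assms by simp
  then have "i \<in> \<tau> ` {1..q}" using setupD(3)[OF assms(1)] by simp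
  then obtain j where j: "j \<in> {1..q}" "i = \<tau> j" by blast
  have "j \<in> {1..p}" using j setupD(2)[OF assms(1)] by simp
  then have "\<tau> i = j" using j(2) tau_props(2)[OF assms(1)] by simp
  then show ?thesis using j by simp
qed

lemma tau_inj:
  assumes "pd_setup p q \<tau>" "a \<in> {1..p}" "b \<in> {1..p}" "\<tau> a = \<tau> b"
  shows "a = b"
proof -
  have "\<tau> (\<tau> a) = a" "\<tau> (\<tau> b) = b" using assms(2,3) tau_props(2)[OF assms(1)] by auto
  then show ?thesis using assms(4) by metis
qed

lemma FV_mem: "(a,b) \<in> F_V p \<longleftrightarrow> 1 \<le> a \<and> a < b \<and> b \<le> p"
  unfolding F_V_def by auto

lemma FL_mem: "(a,b) \<in> F_L p \<tau> \<longleftrightarrow> 1 \<le> a \<and> a < b \<and> b \<le> p \<and> a < \<tau> b"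
  unfolding F_L_def F_V_def by auto

lemma FR_mem: "(a,b) \<in> F_R p \<tau> \<longleftrightarrow> 1 \<le> a \<and> a < b \<and> b \<le> p \<and> a > \<tau> b"
  unfolding F_R_def F_V_def by auto

lemma tau_e_pair: "tau_e \<tau> (a,b) = (min (\<tau> a) (\<tau> b), max (\<tau> a) (\<tau> b))"
  unfolding tau_e_def by simp

lemma LR_cases:
  assumes "pd_setup p q \<tau>" "1 \<le> a" "a \<le> p"
  obtains "a \<le> q" "q < \<tau> a" "\<tau> a \<le> p" "\<tau> (\<tau> a) = a"
    | "q < a" "1 \<le> \<tau> a" "\<tau> a \<le> q" "\<tau> (\<tau> a) = a"
proof (cases "a \<le> q")
  case True
  then show ?thesis using that(1) tau_L[OF assms(1,2) True] tau_props(2)[OF assms(1)] assms by simp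
next
  case False
  then have "q < a" by simp
  then show ?thesis using that(2) tau_R[OF assms(1) _ assms(3)] tau_props(2)[OF assms(1)] assms by simp
qed

lemma tau_e_FV:
  assumes S: "pd_setup p q \<tau>" and e: "e \<in> F_V p"
  shows "tau_e \<tau> e \<in> F_V p"
proof -
  obtain a b where ab: "e = (a,b)" by (cases e)
  have h: "1 \<le> a" "a < b" "b \<le> p" using e ab FV_mem by auto
  have r: "\<tau> a \<in> {1..p}" "\<tau> b \<in> {1..p}" "\<tau> a \<noteq> \<tau> b"
    using tau_props[OF S] tau_inj[OF S, of a b] h by auto
  show ?thesis unfolding ab tau_e_pair FV_mem using r
    by (cases "\<tau> a < \<tau> b") (auto simp: min_def max_def)
qed

lemma tau_e_inv:
  assumes S: "pd_setup p q \<tau>" and e: "e \<in> F_V p"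
  shows "tau_e \<tau> (tau_e \<tau> e) = e"
proof -
  obtain a b where ab: "e = (a,b)" by (cases e)
  have h: "1 \<le> a" "a < b" "b \<le> p" using e ab FV_mem by auto
  have "\<tau> (\<tau> a) = a" "\<tau> (\<tau> b) = b" using tau_props(2)[OF S] h by auto
  then show ?thesis unfolding ab tau_e_pair using h
    by (cases "\<tau> a \<le> \<tau> b") (auto simp: min_def max_def)
qed

lemma arith_LR:
  fixes a b A B p q :: nat
  assumes "1 \<le> a" "a < b" "b \<le> p"
    "a \<le> q \<Longrightarrow> q < A \<and> A \<le> p" "q < a \<Longrightarrow> 1 \<le> A \<and> A \<le> q"
    "b \<le> q \<Longrightarrow> q < B \<and> B \<le> p" "q < b \<Longrightarrow> 1 \<le> B \<and> B \<le> q"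
  shows "a < B \<Longrightarrow> A < B \<Longrightarrow> b < A"
    and "a < B \<Longrightarrow> B < A \<Longrightarrow> a < B"
    and "a > B \<Longrightarrow> A < B \<Longrightarrow> b > A"
    and "a > B \<Longrightarrow> B < A \<Longrightarrow> a > B"
  using assms by (cases "a \<le> q"; cases "b \<le> q"; linarith)+

lemma LR_facts:
  assumes S: "pd_setup p q \<tau>" "1 \<le> a" "a \<le> p"
  shows "a \<le> q \<Longrightarrow> q < \<tau> a \<and> \<tau> a \<le> p" "q < a \<Longrightarrow> 1 \<le> \<tau> a \<and> \<tau> a \<le> q"
  using tau_L[OF S(1)] tau_R[OF S(1)] S by auto

lemma FL_to_FR:
  assumes S: "pd_setup p q \<tau>" and e: "e \<in> F_L p \<tau>"
  shows "tau_e \<tau> e \<in> F_R p \<tau>"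
proof -
  obtain a b where ab: "e = (a,b)" by (cases e)
  have h: "1 \<le> a" "a < b" "b \<le> p" "a < \<tau> b" using e ab FL_mem by auto
  have ta: "\<tau> (\<tau> a) = a" "\<tau> (\<tau> b) = b" using tau_props(2)[OF S] h by auto
  have r: "\<tau> a \<in> {1..p}" "\<tau> b \<in> {1..p}" "\<tau> a \<noteq> \<tau> b"
    using tau_props[OF S] tau_inj[OF S, of a b] h by auto
  note A = arith_LR[OF h(1-3) LR_facts[OF S h(1)] LR_facts[OF S, of b]] 
  show ?thesis
  proof (cases "\<tau> a < \<tau> b")
    case True
    then show ?thesis unfolding ab tau_e_pair FR_mem using A(1) h r ta True by (auto simp: min_def max_def)
  next
    case False
    then have "\<tau> b < \<tau> a" using r by auto
    then show ?thesis unfolding ab tau_e_pair FR_mem using A(2) h r ta by (auto simp: min_def max_def)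
  qed
qed

lemma FR_to_FL:
  assumes S: "pd_setup p q \<tau>" and e: "e \<in> F_R p \<tau>"
  shows "tau_e \<tau> e \<in> F_L p \<tau>"
proof -
  obtain a b where ab: "e = (a,b)" by (cases e)
  have h: "1 \<le> a" "a < b" "b \<le> p" "a > \<tau> b" using e ab FR_mem by auto
  have ta: "\<tau> (\<tau> a) = a" "\<tau> (\<tau> b) = b" using tau_props(2)[OF S] h by auto
  have r: "\<tau> a \<in> {1..p}" "\<tau> b \<in> {1..p}" "\<tau> a \<noteq> \<tau> b"
    using tau_props[OF S] tau_inj[OF S, of a b] h by auto
  note A = arith_LR[OF h(1-3) LR_facts[OF S h(1)] LR_facts[OF S, of b]] 
  show ?thesis
  proof (cases "\<tau> a < \<tau> b")
    case True
    then show ?thesis unfolding ab tau_e_pair FL_mem using A(3) h r ta True by (auto simp: min_def max_def)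
  next
    case False
    then have "\<tau> b < \<tau> a" using r by auto
    then show ?thesis unfolding ab tau_e_pair FL_mem using A(4) h r ta by (auto simp: min_def max_def)
  qed
qed

lemma FV_cases:
  assumes S: "pd_setup p q \<tau>" and e: "e \<in> F_V p"
  shows "e \<in> F_L p \<tau> \<or> e \<in> F_R p \<tau> \<or> tau_e \<tau> e = e"
proof -
  obtain a b where ab: "e = (a,b)" by (cases e)
  have h: "1 \<le> a" "a < b" "b \<le> p" using e ab FV_mem by auto
  have "\<tau> (\<tau> a) = a" "\<tau> (\<tau> b) = b" using tau_props(2)[OF S] h by auto
  show ?thesis
  proof (cases "a < \<tau> b")
    case True then show ?thesis unfolding ab FL_mem using h by simp
  next
    case False
    show ?thesis
    proof (cases "a > \<tau> b")
      case True then show ?thesis unfolding ab FR_mem using h by simp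
    next
      case F2: False
      then have "a = \<tau> b" using False by simp
      then have "\<tau> a = b" using h tau_props(2)[OF S, of b] by simp
      have tb: "\<tau> b = a" using \<open>a = \<tau> b\<close> by simp
      have "tau_e \<tau> (a,b) = (a,b)" unfolding tau_e_pair \<open>\<tau> a = b\<close> tb using h by simp
      then show ?thesis unfolding ab by blast
    qed
  qed
qed

lemma FL_FR_disj: "e \<in> F_L p \<tau> \<Longrightarrow> e \<notin> F_R p \<tau>"
  unfolding F_L_def F_R_def by auto

lemma FL_FV: "e \<in> F_L p \<tau> \<Longrightarrow> e \<in> F_V p" and FR_FV: "e \<in> F_R p \<tau> \<Longrightarrow> e \<in> F_V p"
  unfolding F_L_def F_R_def by auto

lemma FL_nfix: "pd_setup p q \<tau> \<Longrightarrow> e \<in> F_L p \<tau> \<Longrightarrow> tau_e \<tau> e \<noteq> e"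
  using FL_to_FR FL_FR_disj by metis

lemma FR_nfix: "pd_setup p q \<tau> \<Longrightarrow> e \<in> F_R p \<tau> \<Longrightarrow> tau_e \<tau> e \<noteq> e"
  using FR_to_FL FL_FR_disj by metis

lemma fix_not_FL: "tau_e \<tau> e = e \<Longrightarrow> pd_setup p q \<tau> \<Longrightarrow> e \<notin> F_L p \<tau> \<and> e \<notin> F_R p \<tau>"
  using FL_nfix FR_nfix by metis

lemma fix_form:
  assumes S: "pd_setup p q \<tau>" and i: "i \<in> {1..p}" "i < \<tau> i"
  shows "(i, \<tau> i) \<in> F_V p" "tau_e \<tau> (i, \<tau> i) = (i, \<tau> i)"
  using tau_props[OF S i(1)] i unfolding FV_mem tau_e_pair by auto



definition pshape :: "('a \<Rightarrow> 'a) \<Rightarrow> 'a set set \<Rightarrow> bool" where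
  "pshape \<sigma> P \<longleftrightarrow> (\<forall>C\<in>P. (\<exists>x. C = {x}) \<or> (\<exists>x. C = {x, \<sigma> x}))"

definition pmerge :: "('a \<Rightarrow> 'a) \<Rightarrow> 'a set set \<Rightarrow> 'a \<Rightarrow> 'a set set" where
  "pmerge \<sigma> P x = (P - {{x}, {\<sigma> x}}) \<union> {{x, \<sigma> x}}"

lemma part_disj: "partition_on X P \<Longrightarrow> C \<in> P \<Longrightarrow> D \<in> P \<Longrightarrow> x \<in> C \<Longrightarrow> x \<in> D \<Longrightarrow> C = D"
  using partition_onD2 disjointD by blast

lemma part_ne: "partition_on X P \<Longrightarrow> C \<in> P \<Longrightarrow> C \<noteq> {}"
  using partition_onD3 by blast

lemma part_sub: "partition_on X P \<Longrightarrow> C \<in> P \<Longrightarrow> C \<subseteq> X"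
  using partition_onD1 by blast

lemma part_cover: "partition_on X P \<Longrightarrow> x \<in> X \<Longrightarrow> \<exists>C\<in>P. x \<in> C"
  using partition_onD1 by blast

lemma part_eq_sub:
  assumes "partition_on X A" "partition_on X B" "A \<subseteq> B"
  shows "A = B"
proof
  show "B \<subseteq> A"
  proof
    fix D assume D: "D \<in> B"
    then obtain x where x: "x \<in> D" using part_ne[OF assms(2)] by blast
    then have "x \<in> X" using part_sub[OF assms(2) D] by blast
    then obtain C where C: "C \<in> A" "x \<in> C" using part_cover[OF assms(1)] by blast
    then have "C = D" using part_disj[OF assms(2) _ D _ x] assms(3) by blast
    then show "D \<in> A" using C by simp
  qed
qed (rule assms(3))

lemma g_cls:
  assumes P: "partition_on X P" and sh: "pshape \<sigma> P" and inv: "\<forall>y\<in>X. \<sigma> (\<sigma> y) = y"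
    and x: "x \<in> X"
  shows "{x} \<in> P \<or> {x, \<sigma> x} \<in> P"
proof -
  obtain C where C: "C \<in> P" "x \<in> C" using part_cover[OF P x] by blast
  have "(\<exists>y. C = {y}) \<or> (\<exists>y. C = {y, \<sigma> y})" using sh C(1) unfolding pshape_def by blast
  then show ?thesis
  proof
    assume "\<exists>y. C = {y}"
    then show ?thesis using C by blast
  next
    assume "\<exists>y. C = {y, \<sigma> y}"
    then obtain y where y: "C = {y, \<sigma> y}" by blast
    have yX: "y \<in> X" using part_sub[OF P C(1)] y by blast
    show ?thesis
    proof (cases "x = y")
      case True then show ?thesis using C y by simp
    next
      case False
      then have "x = \<sigma> y" using C y by blast
      then have "\<sigma> x = y" using inv yX by simp
      then have "C = {x, \<sigma> x}" using y \<open>x = \<sigma> y\<close> by auto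
      then show ?thesis using C by simp
    qed
  qed
qed

lemma g_twin:
  assumes P: "partition_on X P" and sh: "pshape \<sigma> P" and inv: "\<forall>y\<in>X. \<sigma> (\<sigma> y) = y"
    and x: "x \<in> X" "\<sigma> x \<in> X" and s: "{x} \<in> P"
  shows "{\<sigma> x} \<in> P"
proof -
  have "{\<sigma> x} \<in> P \<or> {\<sigma> x, \<sigma> (\<sigma> x)} \<in> P" using g_cls[OF P sh inv x(2)] .
  then show ?thesis
  proof
    assume a: "{\<sigma> x, \<sigma> (\<sigma> x)} \<in> P"
    have "\<sigma> (\<sigma> x) = x" using inv x(1) by simp
    then have "{\<sigma> x, x} \<in> P" using a by simp
    then have "{\<sigma> x, x} = {x}" by (rule part_disj[OF P _ s, where x=x]) auto
    then have "\<sigma> x \<in> {x}" by (metis insertI1)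
    then have "\<sigma> x = x" by simp
    then show ?thesis using s by simp
  qed
qed

lemma g_pair_nsingle:
  assumes P: "partition_on X P" and pr: "{x, \<sigma> x} \<in> P" "x \<noteq> \<sigma> x"
  shows "{x} \<notin> P" "{\<sigma> x} \<notin> P"
proof -
  show "{x} \<notin> P"
  proof
    assume "{x} \<in> P"
    then have "{x, \<sigma> x} = {x}" by (rule part_disj[OF P pr(1), where x=x]) auto
    then have "\<sigma> x \<in> {x}" by (metis insertI1 insert_commute)
    then show False using pr(2) by simp
  qed
  show "{\<sigma> x} \<notin> P"
  proof
    assume "{\<sigma> x} \<in> P"
    then have "{x, \<sigma> x} = {\<sigma> x}" by (rule part_disj[OF P pr(1), where x="\<sigma> x"]) auto
    then have "x \<in> {\<sigma> x}" by (metis insertI1)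
    then show False using pr(2) by simp
  qed
qed

lemma g_mem:
  assumes P: "partition_on X P" and sh: "pshape \<sigma> P" and inv: "\<forall>y\<in>X. \<sigma> (\<sigma> y) = y"
  shows "C \<in> P \<longleftrightarrow> (\<exists>x\<in>X. C = {x} \<and> {x} \<in> P) \<or> (\<exists>x\<in>X. C = {x, \<sigma> x} \<and> x \<noteq> \<sigma> x \<and> {x} \<notin> P)"
proof
  assume C: "C \<in> P"
  have "(\<exists>y. C = {y}) \<or> (\<exists>y. C = {y, \<sigma> y})" using sh C unfolding pshape_def by blast
  then show "(\<exists>x\<in>X. C = {x} \<and> {x} \<in> P) \<or> (\<exists>x\<in>X. C = {x, \<sigma> x} \<and> x \<noteq> \<sigma> x \<and> {x} \<notin> P)"
  proof
    assume "\<exists>y. C = {y}"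
    then obtain y where "C = {y}" by blast
    then show ?thesis using C part_sub[OF P C] by blast
  next
    assume "\<exists>y. C = {y, \<sigma> y}"
    then obtain y where y: "C = {y, \<sigma> y}" by blast
    have yX: "y \<in> X" using part_sub[OF P C] y by blast
    show ?thesis
    proof (cases "y = \<sigma> y")
      case True
      then have "C = {y}" using y by simp
      then show ?thesis using C yX by blast
    next
      case False
      then have "{y} \<notin> P" using g_pair_nsingle[OF P, of y \<sigma>] C y by blast
      then show ?thesis using y yX False by blast
    qed
  qed
next
  assume "(\<exists>x\<in>X. C = {x} \<and> {x} \<in> P) \<or> (\<exists>x\<in>X. C = {x, \<sigma> x} \<and> x \<noteq> \<sigma> x \<and> {x} \<notin> P)"
  then show "C \<in> P"
  proof
    assume "\<exists>x\<in>X. C = {x} \<and> {x} \<in> P" then show ?thesis by blast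
  next
    assume "\<exists>x\<in>X. C = {x, \<sigma> x} \<and> x \<noteq> \<sigma> x \<and> {x} \<notin> P"
    then obtain x where x: "x \<in> X" "C = {x, \<sigma> x}" "{x} \<notin> P" by blast
    then show ?thesis using g_cls[OF P sh inv x(1)] by simp
  qed
qed

lemma g_eq:
  assumes P: "partition_on X P" and sh: "pshape \<sigma> P"
    and P': "partition_on X P'" and sh': "pshape \<sigma> P'"
    and inv: "\<forall>y\<in>X. \<sigma> (\<sigma> y) = y"
    and s: "\<forall>x\<in>X. {x} \<in> P \<longleftrightarrow> {x} \<in> P'"
  shows "P = P'"
proof (rule set_eqI)
  fix C
  show "C \<in> P \<longleftrightarrow> C \<in> P'"
    unfolding g_mem[OF P sh inv, of C] g_mem[OF P' sh' inv, of C] using s by blast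
qed

lemma refine_card:
  assumes A0: "{} \<notin> A" and Ad: "\<forall>C\<in>A. \<forall>C'\<in>A. C \<inter> C' \<noteq> {} \<longrightarrow> C = C'"
    and B0: "{} \<notin> B" and Bd: "\<forall>C\<in>B. \<forall>C'\<in>B. C \<inter> C' \<noteq> {} \<longrightarrow> C = C'"
    and fB: "finite B"
    and r: "\<forall>C\<in>A. \<exists>S\<subseteq>B. C = \<Union>S"
  shows "card A \<le> card B" "card A = card B \<Longrightarrow> A = B"
proof -
  have ex: "\<exists>D. D \<in> B \<and> D \<subseteq> C \<and> D \<noteq> {}" if C: "C \<in> A" for C
  proof -
    obtain S where S: "S \<subseteq> B" "C = \<Union>S" using r C by blast
    have "C \<noteq> {}" using A0 C by metis
    then obtain x where "x \<in> C" by blast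
    then obtain D where "D \<in> S" "x \<in> D" using S by blast
    then show ?thesis using S by blast
  qed
  define h where "h C = (SOME D. D \<in> B \<and> D \<subseteq> C \<and> D \<noteq> {})" for C
  have h: "h C \<in> B \<and> h C \<subseteq> C \<and> h C \<noteq> {}" if "C \<in> A" for C
    unfolding h_def using someI_ex[OF ex[OF that]] .
  have inj: "inj_on h A"
  proof (rule inj_onI)
    fix C C' assume "C \<in> A" "C' \<in> A" "h C = h C'"
    then have "C \<inter> C' \<noteq> {}" using h[of C] h[of C'] by blast
    then show "C = C'" using Ad \<open>C \<in> A\<close> \<open>C' \<in> A\<close> by blast
  qed
  have hB: "h ` A \<subseteq> B" using h by blast
  show le: "card A \<le> card B" using card_inj_on_le[OF inj hB fB] .
  assume eq: "card A = card B"
  have "card (h ` A) = card B" using card_image[OF inj] eq by simp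
  then have hAB: "h ` A = B" using card_subset_eq[OF fB hB] by simp
  have hC: "h C = C" if C: "C \<in> A" for C
  proof -
    obtain S where S: "S \<subseteq> B" "C = \<Union>S" using r C by blast
    have "D \<subseteq> h C" if D: "D \<in> S" for D
    proof -
      have "D \<in> h ` A" using D S hAB by blast
      then obtain C' where C': "C' \<in> A" "D = h C'" by blast
      have "D \<subseteq> C" using D S by blast
      moreover have "D \<subseteq> C'" "D \<noteq> {}" using h[OF C'(1)] C'(2) by auto
      ultimately have "C \<inter> C' \<noteq> {}" by blast
      then have "C = C'" using Ad C C'(1) by blast
      then show ?thesis using C'(2) by simp
    qed
    then have "C \<subseteq> h C" using S by blast
    then show ?thesis using h[OF C] by blast
  qed
  have "h ` A = A" using hC by (auto simp: image_iff)
  then show "A = B" using hAB by simp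
qed



lemma part_iff:
  "partition_on X P \<longleftrightarrow> \<Union>P = X \<and> (\<forall>C\<in>P. \<forall>D\<in>P. C \<inter> D \<noteq> {} \<longrightarrow> C = D) \<and> {} \<notin> P"
  unfolding partition_on_def disjoint_def by blast

lemma part_Union_sub:
  assumes "partition_on X P" "P' \<subseteq> P"
  shows "partition_on (\<Union>P') P'"
  using assms unfolding part_iff by blast

lemma part_remove:
  assumes P: "partition_on X P" and C: "C \<in> P"
  shows "\<Union>(P - {C}) = X - C"
proof -
  have "\<Union>P = X" using P unfolding part_iff by blast
  moreover have "\<forall>D\<in>P. D \<noteq> C \<longrightarrow> D \<inter> C = {}" using P C unfolding part_iff by blast
  ultimately show ?thesis by blast
qed

lemma pmerge_props:
  assumes P: "partition_on X P" and sx: "{x} \<in> P" "{\<sigma> x} \<in> P" and ne: "x \<noteq> \<sigma> x"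
  shows "partition_on X (pmerge \<sigma> P x)" "{x, \<sigma> x} \<notin> P"
    "\<forall>C\<in>pmerge \<sigma> P x. \<exists>S\<subseteq>P. C = \<Union>S"
    "{x, \<sigma> x} \<in> pmerge \<sigma> P x"
proof -
  show nP: "{x, \<sigma> x} \<notin> P"
  proof
    assume "{x, \<sigma> x} \<in> P"
    then have "{x, \<sigma> x} = {x}" by (rule part_disj[OF P _ sx(1), where x=x]) auto
    then have "\<sigma> x \<in> {x}" by (metis insertI1 insert_commute)
    then show False using ne by simp
  qed
  have U: "\<Union>P = X" using P unfolding part_iff by blast
  have d: "\<forall>C\<in>P. \<forall>D\<in>P. C \<inter> D \<noteq> {} \<longrightarrow> C = D" using P unfolding part_iff by blast
  have n0: "{} \<notin> P" using P unfolding part_iff by blast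
  have dx: "D \<inter> {x, \<sigma> x} = {}" if "D \<in> P" "D \<noteq> {x}" "D \<noteq> {\<sigma> x}" for D
  proof -
    have "x \<notin> D"
    proof
      assume "x \<in> D" then have "D = {x}" using d that(1) sx(1) by blast
      then show False using that by simp
    qed
    moreover have "\<sigma> x \<notin> D"
    proof
      assume "\<sigma> x \<in> D" then have "D = {\<sigma> x}" using d that(1) sx(2) by blast
      then show False using that by simp
    qed
    ultimately show ?thesis by blast
  qed
  show "partition_on X (pmerge \<sigma> P x)"
    unfolding part_iff
  proof (intro conjI)
    show "\<Union>(pmerge \<sigma> P x) = X" unfolding pmerge_def using U sx by blast
    show "{} \<notin> pmerge \<sigma> P x" unfolding pmerge_def using n0 by blast
    show "\<forall>C\<in>pmerge \<sigma> P x. \<forall>D\<in>pmerge \<sigma> P x. C \<inter> D \<noteq> {} \<longrightarrow> C = D"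
    proof (intro ballI impI)
      fix C D assume C: "C \<in> pmerge \<sigma> P x" and D: "D \<in> pmerge \<sigma> P x" and CD: "C \<inter> D \<noteq> {}"
      consider "C = {x, \<sigma> x}" | "C \<in> P" "C \<noteq> {x}" "C \<noteq> {\<sigma> x}" using C unfolding pmerge_def by blast
      moreover consider "D = {x, \<sigma> x}" | "D \<in> P" "D \<noteq> {x}" "D \<noteq> {\<sigma> x}" using D unfolding pmerge_def by blast
      ultimately show "C = D" using dx d CD by (metis inf_commute)
    qed
  qed
  show "\<forall>C\<in>pmerge \<sigma> P x. \<exists>S\<subseteq>P. C = \<Union>S"
  proof
    fix C assume "C \<in> pmerge \<sigma> P x"
    then consider "C = {x, \<sigma> x}" | "C \<in> P" unfolding pmerge_def by blast
    then show "\<exists>S\<subseteq>P. C = \<Union>S"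
    proof cases
      case 1 then show ?thesis using sx by (intro exI[of _ "{{x}, {\<sigma> x}}"]) auto
    next
      case 2 then show ?thesis by (intro exI[of _ "{C}"]) auto
    qed
  qed
  show "{x, \<sigma> x} \<in> pmerge \<sigma> P x" unfolding pmerge_def by blast
qed

lemma pmerge_card:
  assumes P: "partition_on X P" and sx: "{x} \<in> P" "{\<sigma> x} \<in> P" and ne: "x \<noteq> \<sigma> x"
    and f: "finite P"
  shows "card (pmerge \<sigma> P x) + 1 = card P"
proof -
  have nP: "{x, \<sigma> x} \<notin> P" using pmerge_props[where \<sigma>=\<sigma>, OF P sx ne] by blast
  have sub: "{{x}, {\<sigma> x}} \<subseteq> P" using sx by blast
  have c2: "card {{x}, {\<sigma> x}} = 2" using ne by simp
  have "card (P - {{x}, {\<sigma> x}}) = card P - 2"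
    using card_Diff_subset[OF _ sub] c2 by simp
  moreover have "card P \<ge> 2" using card_mono[OF f sub] c2 by simp
  moreover have "pmerge \<sigma> P x = insert {x, \<sigma> x} (P - {{x}, {\<sigma> x}})" unfolding pmerge_def by blast
  moreover have "{x, \<sigma> x} \<notin> P - {{x}, {\<sigma> x}}" using nP by blast
  ultimately show ?thesis using f by simp
qed

lemma pmerge_shape:
  assumes "pshape \<sigma> P" shows "pshape \<sigma> (pmerge \<sigma> P x)"
  using assms unfolding pshape_def pmerge_def by blast


lemma merge_refine:
  assumes A: "partition_on X A" and B: "partition_on X B"
    and sx: "{x} \<in> B" "{\<sigma> x} \<in> B" and r: "\<forall>C\<in>A. \<exists>S\<subseteq>B. C = \<Union>S"
    and pA: "{x, \<sigma> x} \<in> A"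
  shows "\<forall>C\<in>A. \<exists>S\<subseteq>pmerge \<sigma> B x. C = \<Union>S"
proof
  fix C assume C: "C \<in> A"
  show "\<exists>S\<subseteq>pmerge \<sigma> B x. C = \<Union>S"
  proof (cases "C = {x, \<sigma> x}")
    case True
    then show ?thesis unfolding pmerge_def by (intro exI[of _ "{C}"]) auto
  next
    case False
    then have disj: "C \<inter> {x, \<sigma> x} = {}" using part_disj[OF A C pA] by blast
    obtain S where S: "S \<subseteq> B" "C = \<Union>S" using r C by blast
    have "{x} \<notin> S" "{\<sigma> x} \<notin> S" using S disj by blast+
    then have "S \<subseteq> pmerge \<sigma> B x" using S unfolding pmerge_def by blast
    then show ?thesis using S by blast
  qed
qed

lemma single_refine:
  assumes r: "\<forall>C\<in>A. \<exists>S\<subseteq>B. C = \<Union>S" and B0: "{} \<notin> B" and s: "{x} \<in> A"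
  shows "{x} \<in> B"
proof -
  obtain S where S: "S \<subseteq> B" "{x} = \<Union>S" using r s by blast
  then obtain D where D: "D \<in> S" "x \<in> D" by blast
  have "D \<subseteq> {x}" using S D by blast
  then have "D = {x}" using D by blast
  then show ?thesis using S D by blast
qed

definition estrong :: "(nat \<Rightarrow> nat) \<Rightarrow> edge set set \<Rightarrow> bool" where
  "estrong \<tau> P \<longleftrightarrow> (\<forall>C\<in>P. (\<exists>e. C = {e}) \<or> (\<exists>e. C = {e, tau_e \<tau> e} \<and> e \<noteq> tau_e \<tau> e))"

lemma finite_FV: "finite (F_V p)"
proof -
  have "F_V p \<subseteq> {1..p} \<times> {1..p}" unfolding F_V_def by auto
  then show ?thesis by (rule finite_subset) simp
qed

lemma pdD:
  assumes S: "pd_setup p q \<tau>" and G: "is_pdCG p \<tau> G"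
  shows "partition_on {1..p} (vclasses G)" "pshape \<tau> (vclasses G)" "pd_edges G \<subseteq> F_V p"
    "partition_on (pd_edges G) (eclasses G)" "pshape (tau_e \<tau>) (eclasses G)"
    "estrong \<tau> (eclasses G)"
    "\<forall>y\<in>{1..p}. \<tau> (\<tau> y) = y" "\<forall>e\<in>pd_edges G. tau_e \<tau> (tau_e \<tau> e) = e"
    "finite (vclasses G)" "finite (eclasses G)"
proof -
  show v: "partition_on {1..p} (vclasses G)" "pshape \<tau> (vclasses G)" "pd_edges G \<subseteq> F_V p"
    "partition_on (pd_edges G) (eclasses G)" "estrong \<tau> (eclasses G)"
    using G unfolding is_pdCG_def pshape_def estrong_def by blast+
  then show "pshape (tau_e \<tau>) (eclasses G)" unfolding estrong_def pshape_def by blast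
  show "\<forall>y\<in>{1..p}. \<tau> (\<tau> y) = y" using tau_props(2)[OF S] by blast
  show "\<forall>e\<in>pd_edges G. tau_e \<tau> (tau_e \<tau> e) = e" using tau_e_inv[OF S] v(3) by blast
  have "vclasses G \<subseteq> Pow {1..p}" using part_sub[OF v(1)] by blast
  then show "finite (vclasses G)" by (rule finite_subset) simp
  have "eclasses G \<subseteq> Pow (F_V p)" using part_sub[OF v(4)] v(3) by blast
  then show "finite (eclasses G)" by (rule finite_subset) (simp add: finite_FV)
qed

lemma pdI:
  assumes "partition_on {1..p} V" "pshape \<tau> V" "\<Union>EC \<subseteq> F_V p"
    "partition_on (\<Union>EC) EC" "estrong \<tau> EC"
  shows "is_pdCG p \<tau> (V, EC)"
  using assms unfolding is_pdCG_def pshape_def estrong_def vclasses_def eclasses_def pd_edges_def by simp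

lemma cg_eq: "vclasses H = vclasses G \<Longrightarrow> eclasses H = eclasses G \<Longrightarrow> H = G"
  unfolding vclasses_def eclasses_def by (simp add: prod_eq_iff)

definition vmerge :: "(nat \<Rightarrow> nat) \<Rightarrow> cgraph \<Rightarrow> nat \<Rightarrow> cgraph" where
  "vmerge \<tau> G i = (pmerge \<tau> (vclasses G) i, eclasses G)"
definition emerge :: "(nat \<Rightarrow> nat) \<Rightarrow> cgraph \<Rightarrow> edge \<Rightarrow> cgraph" where
  "emerge \<tau> G e = (vclasses G, pmerge (tau_e \<tau>) (eclasses G) e)"
definition eremove :: "cgraph \<Rightarrow> edge set \<Rightarrow> cgraph" where
  "eremove G C = (vclasses G, eclasses G - {C})"

definition is_step :: "nat \<Rightarrow> (nat \<Rightarrow> nat) \<Rightarrow> cgraph \<Rightarrow> cgraph \<Rightarrow> bool" where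
  "is_step p \<tau> H G \<longleftrightarrow>
     (\<exists>i\<in>{1..p}. {i} \<in> vclasses G \<and> {\<tau> i} \<in> vclasses G \<and> H = vmerge \<tau> G i)
   \<or> (\<exists>e\<in>pd_edges G. {e} \<in> eclasses G \<and> {tau_e \<tau> e} \<in> eclasses G \<and> e \<noteq> tau_e \<tau> e \<and> H = emerge \<tau> G e)
   \<or> (\<exists>C\<in>eclasses G. H = eremove G C)"

definition mu :: "cgraph \<Rightarrow> nat" where
  "mu G = card (vclasses G) + card (eclasses G)"

lemma model_le_refl: "model_le G G"
  unfolding model_le_def by (auto intro!: exI[of _ "{_}"])

lemma le_cards:
  assumes S: "pd_setup p q \<tau>" and H: "is_pdCG p \<tau> H" and G: "is_pdCG p \<tau> G" and le: "model_le H G"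
  shows "card (vclasses H) \<le> card (vclasses G)" "card (vclasses H) = card (vclasses G) \<Longrightarrow> vclasses H = vclasses G"
    "card (eclasses H) \<le> card (eclasses G)" "card (eclasses H) = card (eclasses G) \<Longrightarrow> eclasses H = eclasses G"
proof -
  note h = pdD[OF S H] and g = pdD[OF S G]
  have rv: "\<forall>C\<in>vclasses H. \<exists>S\<subseteq>vclasses G. C = \<Union>S" and re: "\<forall>C\<in>eclasses H. \<exists>S\<subseteq>eclasses G. C = \<Union>S"
    using le unfolding model_le_def by blast+
  have a1: "{} \<notin> vclasses H" "\<forall>C\<in>vclasses H. \<forall>C'\<in>vclasses H. C \<inter> C' \<noteq> {} \<longrightarrow> C = C'"
    using h(1) unfolding part_iff by blast+
  have b1: "{} \<notin> vclasses G" "\<forall>C\<in>vclasses G. \<forall>C'\<in>vclasses G. C \<inter> C' \<noteq> {} \<longrightarrow> C = C'"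
    using g(1) unfolding part_iff by blast+
  have a2: "{} \<notin> eclasses H" "\<forall>C\<in>eclasses H. \<forall>C'\<in>eclasses H. C \<inter> C' \<noteq> {} \<longrightarrow> C = C'"
    using h(4) unfolding part_iff by blast+
  have b2: "{} \<notin> eclasses G" "\<forall>C\<in>eclasses G. \<forall>C'\<in>eclasses G. C \<inter> C' \<noteq> {} \<longrightarrow> C = C'"
    using g(4) unfolding part_iff by blast+
  show "card (vclasses H) \<le> card (vclasses G)" "card (vclasses H) = card (vclasses G) \<Longrightarrow> vclasses H = vclasses G"
    using refine_card[OF a1 b1 g(9) rv] by blast+
  show "card (eclasses H) \<le> card (eclasses G)" "card (eclasses H) = card (eclasses G) \<Longrightarrow> eclasses H = eclasses G"
    using refine_card[OF a2 b2 g(10) re] by blast+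
qed

lemma le_mu:
  assumes S: "pd_setup p q \<tau>" and H: "is_pdCG p \<tau> H" and G: "is_pdCG p \<tau> G" and le: "model_le H G"
  shows "mu H \<le> mu G" "mu H = mu G \<Longrightarrow> H = G"
proof -
  note c = le_cards[OF S H G le]
  show "mu H \<le> mu G" using c(1,3) unfolding mu_def by simp
  assume "mu H = mu G"
  then have "card (vclasses H) = card (vclasses G)" "card (eclasses H) = card (eclasses G)"
    using c(1,3) unfolding mu_def by simp_all
  then show "H = G" using c(2,4) cg_eq by blast
qed

lemma le_antisym:
  assumes S: "pd_setup p q \<tau>" and H: "is_pdCG p \<tau> H" and G: "is_pdCG p \<tau> G"
    and "model_le H G" "model_le G H"
  shows "H = G"
  using le_mu[OF S H G assms(4)] le_mu[OF S G H assms(5)] by simp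

lemma less_iff:
  assumes S: "pd_setup p q \<tau>" and H: "is_pdCG p \<tau> H" and G: "is_pdCG p \<tau> G"
  shows "model_less H G \<longleftrightarrow> model_le H G \<and> H \<noteq> G"
  unfolding model_less_def using le_antisym[OF S H G] model_le_refl by blast


lemma step_sel[simp]:
  "vclasses (vmerge \<tau> G i) = pmerge \<tau> (vclasses G) i" "eclasses (vmerge \<tau> G i) = eclasses G"
  "vclasses (emerge \<tau> G e) = vclasses G" "eclasses (emerge \<tau> G e) = pmerge (tau_e \<tau>) (eclasses G) e"
  "vclasses (eremove G C) = vclasses G" "eclasses (eremove G C) = eclasses G - {C}"
  "vclasses (V, EC) = V" "eclasses (V, EC) = EC"
  unfolding vmerge_def emerge_def eremove_def vclasses_def eclasses_def by simp_all

lemma mu_eq: "mu G = card (vclasses G) + card (eclasses G)" by (simp add: mu_def)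

lemma step_vmerge:
  assumes S: "pd_setup p q \<tau>" and G: "is_pdCG p \<tau> G" and i: "i \<in> {1..p}"
    and s: "{i} \<in> vclasses G" "{\<tau> i} \<in> vclasses G"
  defines "H \<equiv> vmerge \<tau> G i"
  shows "is_pdCG p \<tau> H \<and> model_le H G \<and> H \<noteq> G \<and> mu H + 1 = mu G"
proof -
  note g = pdD[OF S G]
  have ne: "i \<noteq> \<tau> i" using tau_props(3)[OF S i] by simp
  note pm = pmerge_props[where \<sigma>=\<tau>, OF g(1) s ne]
  have pdH: "is_pdCG p \<tau> H"
  proof -
    have "is_pdCG p \<tau> (pmerge \<tau> (vclasses G) i, eclasses G)"
      by (rule pdI) (use pm(1) pmerge_shape[OF g(2)] g(3,4,6) in \<open>simp_all add: pd_edges_def\<close>)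
    then show ?thesis unfolding H_def vmerge_def .
  qed
  have le: "model_le H G"
    unfolding model_le_def H_def pd_edges_def using pm(3) by (auto intro!: exI[of _ "{_}"])
  have neq: "H \<noteq> G" using pm(2,4) unfolding H_def by (metis step_sel(1))
  have "mu H + 1 = mu G" unfolding H_def mu_eq step_sel
    using pmerge_card[where \<sigma>=\<tau>, OF g(1) s ne g(9)] by simp
  then show ?thesis using pdH le neq by blast
qed

lemma step_emerge:
  assumes S: "pd_setup p q \<tau>" and G: "is_pdCG p \<tau> G" and e: "e \<in> pd_edges G"
    and s: "{e} \<in> eclasses G" "{tau_e \<tau> e} \<in> eclasses G" and ne: "e \<noteq> tau_e \<tau> e"
  defines "H \<equiv> emerge \<tau> G e"
  shows "is_pdCG p \<tau> H \<and> model_le H G \<and> H \<noteq> G \<and> mu H + 1 = mu G"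
proof -
  note g = pdD[OF S G]
  note pm = pmerge_props[where \<sigma>="tau_e \<tau>", OF g(4) s ne]
  have U: "\<Union>(pmerge (tau_e \<tau>) (eclasses G) e) = pd_edges G" using pm(1) unfolding part_iff by blast
  have es: "estrong \<tau> (pmerge (tau_e \<tau>) (eclasses G) e)"
    using g(6) ne unfolding estrong_def pmerge_def by blast
  have pdH: "is_pdCG p \<tau> H"
  proof -
    have "is_pdCG p \<tau> (vclasses G, pmerge (tau_e \<tau>) (eclasses G) e)"
      by (rule pdI) (use pm(1) U g(1,2,3) es in \<open>simp_all\<close>)
    then show ?thesis unfolding H_def emerge_def .
  qed
  have le: "model_le H G"
    unfolding model_le_def H_def using pm(3) U by (auto simp: pd_edges_def intro!: exI[of _ "{_}"])
  have neq: "H \<noteq> G" using pm(2,4) unfolding H_def by (metis step_sel(4))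
  have "mu H + 1 = mu G" unfolding H_def mu_eq step_sel
    using pmerge_card[where \<sigma>="tau_e \<tau>", OF g(4) s ne g(10)] by simp
  then show ?thesis using pdH le neq by blast
qed

lemma step_eremove:
  assumes S: "pd_setup p q \<tau>" and G: "is_pdCG p \<tau> G" and C: "C \<in> eclasses G"
  defines "H \<equiv> eremove G C"
  shows "is_pdCG p \<tau> H \<and> model_le H G \<and> H \<noteq> G \<and> mu H + 1 = mu G"
proof -
  note g = pdD[OF S G]
  have U: "\<Union>(eclasses G - {C}) = pd_edges G - C" using part_remove[OF g(4) C] .
  have pdH: "is_pdCG p \<tau> H"
  proof -
    have "is_pdCG p \<tau> (vclasses G, eclasses G - {C})"
      by (rule pdI) (use g(1,2,3,6) U part_Union_sub[OF g(4), of "eclasses G - {C}"] in \<open>auto simp: estrong_def\<close>)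
    then show ?thesis unfolding H_def eremove_def .
  qed
  have le: "model_le H G"
    unfolding model_le_def H_def using U by (auto simp: pd_edges_def intro!: exI[of _ "{_}"])
  have neq: "H \<noteq> G" using C unfolding H_def by (metis Diff_iff insertI1 step_sel(6))
  have "mu H + 1 = mu G" unfolding H_def mu_eq step_sel
    using C g(10) card_Diff1_less[OF g(10) C] card_Suc_Diff1[OF g(10) C] by simp
  then show ?thesis using pdH le neq by blast
qed

lemma step_pd:
  assumes S: "pd_setup p q \<tau>" and G: "is_pdCG p \<tau> G" and st: "is_step p \<tau> H G"
  shows "is_pdCG p \<tau> H \<and> model_le H G \<and> H \<noteq> G \<and> mu H + 1 = mu G"
  using st unfolding is_step_def
proof (elim disjE bexE conjE)
  fix i assume "i \<in> {1..p}" "{i} \<in> vclasses G" "{\<tau> i} \<in> vclasses G" "H = vmerge \<tau> G i"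
  then show ?thesis using step_vmerge[OF S G] by simp
next
  fix e assume "e \<in> pd_edges G" "{e} \<in> eclasses G" "{tau_e \<tau> e} \<in> eclasses G" "e \<noteq> tau_e \<tau> e" "H = emerge \<tau> G e"
  then show ?thesis using step_emerge[OF S G] by simp
next
  fix C assume "C \<in> eclasses G" "H = eremove G C"
  then show ?thesis using step_eremove[OF S G] by simp
qed


lemma exists_step:
  assumes S: "pd_setup p q \<tau>" and H: "is_pdCG p \<tau> H" and G: "is_pdCG p \<tau> G"
    and le: "model_le H G" and neq: "H \<noteq> G"
  shows "\<exists>F. is_step p \<tau> F G \<and> model_le H F"
proof -
  note h = pdD[OF S H] and g = pdD[OF S G]
  have rv: "\<forall>C\<in>vclasses H. \<exists>S\<subseteq>vclasses G. C = \<Union>S" and re: "\<forall>C\<in>eclasses H. \<exists>S\<subseteq>eclasses G. C = \<Union>S"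
    and Esub: "pd_edges H \<subseteq> pd_edges G"
    using le unfolding model_le_def by blast+
  have gv0: "{} \<notin> vclasses G" and ge0: "{} \<notin> eclasses G" using g(1,4) unfolding part_iff by blast+
  show ?thesis
  proof (cases "vclasses H = vclasses G")
    case False
    then have "\<not> vclasses H \<subseteq> vclasses G" using part_eq_sub[OF h(1) g(1)] by blast
    then obtain C where C: "C \<in> vclasses H" "C \<notin> vclasses G" by blast
    have d: "(\<exists>x\<in>{1..p}. C = {x} \<and> {x} \<in> vclasses H) \<or> (\<exists>x\<in>{1..p}. C = {x, \<tau> x} \<and> x \<noteq> \<tau> x \<and> {x} \<notin> vclasses H)"
      using g_mem[OF h(1) h(2) h(7)] C(1) by blast
    have "\<not> (\<exists>x\<in>{1..p}. C = {x} \<and> {x} \<in> vclasses H)"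
    proof
      assume "\<exists>x\<in>{1..p}. C = {x} \<and> {x} \<in> vclasses H"
      then obtain x where "C = {x}" "{x} \<in> vclasses H" by blast
      then show False using single_refine[OF rv gv0, of x] C(2) by simp
    qed
    with d obtain i where i: "i \<in> {1..p}" "C = {i, \<tau> i}" "i \<noteq> \<tau> i" "{i} \<notin> vclasses H"
      by blast
    have s1: "{i} \<in> vclasses G" using g_cls[OF g(1) g(2) g(7) i(1)] C(2) i(2) by blast
    have ti: "\<tau> i \<in> {1..p}" using tau_props(1)[OF S i(1)] .
    have s2: "{\<tau> i} \<in> vclasses G" using g_twin[OF g(1) g(2) g(7) i(1) ti s1] .
    define F where "F = vmerge \<tau> G i"
    have st: "is_step p \<tau> F G" unfolding is_step_def F_def using i(1) s1 s2 by blast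
    have "\<forall>C\<in>vclasses H. \<exists>S\<subseteq>pmerge \<tau> (vclasses G) i. C = \<Union>S"
      using merge_refine[where \<sigma>=\<tau>, OF h(1) g(1) s1 s2 rv] C(1) i(2) by blast
    then have "model_le H F" unfolding model_le_def F_def using le unfolding model_le_def pd_edges_def by simp
    then show ?thesis using st by blast
  next
    case vT: True
    show ?thesis
    proof (cases "pd_edges H = pd_edges G")
      case False
      then obtain x where x: "x \<in> pd_edges G" "x \<notin> pd_edges H" using Esub by blast
      then obtain D where D: "D \<in> eclasses G" "x \<in> D" unfolding pd_edges_def by blast
      have DH: "D \<inter> pd_edges H = {}"
      proof (rule ccontr)
        assume "D \<inter> pd_edges H \<noteq> {}"
        then obtain y where y: "y \<in> D" "y \<in> pd_edges H" by blast
        then obtain C' where C': "C' \<in> eclasses H" "y \<in> C'" unfolding pd_edges_def by blast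
        obtain S' where S': "S' \<subseteq> eclasses G" "C' = \<Union>S'" using re C'(1) by blast
        then obtain D' where D': "D' \<in> S'" "y \<in> D'" using C'(2) by blast
        have "D' = D" using part_disj[OF g(4) _ D(1) D'(2) y(1)] D' S' by blast
        then have "x \<in> C'" using D' S' D(2) by blast
        then show False using x(2) C'(1) unfolding pd_edges_def by blast
      qed
      define F where "F = eremove G D"
      have st: "is_step p \<tau> F G" unfolding is_step_def F_def using D(1) by blast
      have U: "\<Union>(eclasses G - {D}) = pd_edges G - D" using part_remove[OF g(4) D(1)] .
      have e1: "pd_edges H \<subseteq> pd_edges F" unfolding F_def using U Esub DH
        by (auto simp: pd_edges_def)
      have e2: "\<forall>C\<in>eclasses H. \<exists>S\<subseteq>eclasses F. C = \<Union>S"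
      proof
        fix C assume C: "C \<in> eclasses H"
        obtain S' where S': "S' \<subseteq> eclasses G" "C = \<Union>S'" using re C by blast
        have "C \<subseteq> pd_edges H" using C unfolding pd_edges_def by blast
        then have "D \<notin> S'" using S' DH D(2) by blast
        then show "\<exists>S\<subseteq>eclasses F. C = \<Union>S" using S' unfolding F_def by (intro exI[of _ S']) auto
      qed
      have "model_le H F" unfolding model_le_def using e1 e2 rv vT unfolding F_def by simp
      then show ?thesis using st by blast
    next
      case eT: True
      have "eclasses H \<noteq> eclasses G" using vT neq cg_eq by blast
      moreover have "partition_on (pd_edges G) (eclasses H)" using h(4) eT by simp
      ultimately have "\<not> eclasses H \<subseteq> eclasses G" using part_eq_sub[OF _ g(4)] by blast
      then obtain C where C: "C \<in> eclasses H" "C \<notin> eclasses G" by blast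
      have hinv: "\<forall>y\<in>pd_edges H. tau_e \<tau> (tau_e \<tau> y) = y" using h(8) .
      have d: "(\<exists>x\<in>pd_edges H. C = {x} \<and> {x} \<in> eclasses H) \<or> (\<exists>x\<in>pd_edges H. C = {x, tau_e \<tau> x} \<and> x \<noteq> tau_e \<tau> x \<and> {x} \<notin> eclasses H)"
        using g_mem[OF h(4) h(5) hinv] C(1) by blast
      have "\<not> (\<exists>x\<in>pd_edges H. C = {x} \<and> {x} \<in> eclasses H)"
      proof
        assume "\<exists>x\<in>pd_edges H. C = {x} \<and> {x} \<in> eclasses H"
        then obtain x where "C = {x}" "{x} \<in> eclasses H" by blast
        then show False using single_refine[OF re ge0, of x] C(2) by simp
      qed
      with d obtain e where e: "e \<in> pd_edges H" "C = {e, tau_e \<tau> e}" "e \<noteq> tau_e \<tau> e" "{e} \<notin> eclasses H"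
        by blast
      have eG: "e \<in> pd_edges G" using e(1) eT by simp
      have s1: "{e} \<in> eclasses G" using g_cls[OF g(4) g(5) g(8) eG] C(2) e(2) by blast
      have teG: "tau_e \<tau> e \<in> pd_edges G" using e(2) C(1) eT unfolding pd_edges_def by blast
      have s2: "{tau_e \<tau> e} \<in> eclasses G" using g_twin[OF g(4) g(5) g(8) eG teG s1] .
      define F where "F = emerge \<tau> G e"
      have st: "is_step p \<tau> F G" unfolding is_step_def F_def using eG s1 s2 e(3) by blast
      have "\<forall>C\<in>eclasses H. \<exists>S\<subseteq>pmerge (tau_e \<tau>) (eclasses G) e. C = \<Union>S"
        using merge_refine[where \<sigma>="tau_e \<tau>", OF h(4)[unfolded eT] g(4) s1 s2 re] C(1) e(2) by blast
      moreover have "pd_edges F = pd_edges G"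
        using step_emerge[OF S G eG s1 s2 e(3)] pmerge_props[where \<sigma>="tau_e \<tau>", OF g(4) s1 s2 e(3)]
        unfolding F_def pd_edges_def part_iff by simp
      ultimately have "model_le H F" unfolding model_le_def F_def using le vT eT unfolding model_le_def by simp
      then show ?thesis using st by blast
    qed
  qed
qed

lemma covered_iff:
  assumes S: "pd_setup p q \<tau>" and G: "is_pdCG p \<tau> G"
  shows "covered_by p \<tau> H G \<longleftrightarrow> is_pdCG p \<tau> H \<and> is_step p \<tau> H G"
proof
  assume c: "covered_by p \<tau> H G"
  then have H: "is_pdCG p \<tau> H" and lt: "model_less H G"
    and nF: "\<not> (\<exists>F. is_pdCG p \<tau> F \<and> model_less H F \<and> model_less F G)"
    unfolding covered_by_def by blast+
  have le: "model_le H G" and neq: "H \<noteq> G" using lt less_iff[OF S H G] by blast+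
  obtain F where F: "is_step p \<tau> F G" "model_le H F" using exists_step[OF S H G le neq] by blast
  have sF: "is_pdCG p \<tau> F \<and> model_le F G \<and> F \<noteq> G \<and> mu F + 1 = mu G" using step_pd[OF S G F(1)] .
  have "H = F"
  proof (rule ccontr)
    assume "H \<noteq> F"
    then have "model_less H F" using less_iff[OF S H, of F] sF F(2) by blast
    moreover have "model_less F G" using less_iff[OF S _ G, of F] sF by blast
    ultimately show False using nF sF by blast
  qed
  then show "is_pdCG p \<tau> H \<and> is_step p \<tau> H G" using H F(1) by simp
next
  assume a: "is_pdCG p \<tau> H \<and> is_step p \<tau> H G"
  then have H: "is_pdCG p \<tau> H" by blast
  have sH: "model_le H G \<and> H \<noteq> G \<and> mu H + 1 = mu G" using step_pd[OF S G] a by blast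
  have lt: "model_less H G" using less_iff[OF S H G] sH by blast
  have "\<not> (\<exists>F. is_pdCG p \<tau> F \<and> model_less H F \<and> model_less F G)"
  proof
    assume "\<exists>F. is_pdCG p \<tau> F \<and> model_less H F \<and> model_less F G"
    then obtain F where F: "is_pdCG p \<tau> F" "model_less H F" "model_less F G" by blast
    have l1: "model_le H F" "H \<noteq> F" using F(2) less_iff[OF S H F(1)] by blast+
    have l2: "model_le F G" "F \<noteq> G" using F(3) less_iff[OF S F(1) G] by blast+
    have m1: "mu H \<le> mu F" "mu H = mu F \<Longrightarrow> H = F" using le_mu[OF S H F(1) l1(1)] by blast+
    have m2: "mu F \<le> mu G" "mu F = mu G \<Longrightarrow> F = G" using le_mu[OF S F(1) G l2(1)] by blast+
    show False using m1 m2 l1(2) l2(2) sH by linarith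
  qed
  then show "covered_by p \<tau> H G" unfolding covered_by_def using H lt by blast
qed



lemma EE_mem:
  assumes S: "pd_setup p q \<tau>" and H: "is_pdCG p \<tau> H"
  shows "f \<in> pd_EE p \<tau> H \<longleftrightarrow> f \<in> pd_edges H \<and> f \<in> F_L p \<tau> \<and> tau_e \<tau> f \<in> pd_edges H \<and> {f} \<in> eclasses H"
proof
  note h = pdD[OF S H]
  assume "f \<in> pd_EE p \<tau> H"
  then have f: "f \<in> pd_edges H" "f \<in> F_L p \<tau>" "{f} \<in> eclasses H" "f \<in> tau_e \<tau> ` (pd_edges H \<inter> F_R p \<tau>)"
    unfolding pd_EE_def by blast+
  then obtain g where g: "g \<in> pd_edges H" "f = tau_e \<tau> g" by blast
  have "tau_e \<tau> f = g" using g h(8) by simp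
  then show "f \<in> pd_edges H \<and> f \<in> F_L p \<tau> \<and> tau_e \<tau> f \<in> pd_edges H \<and> {f} \<in> eclasses H"
    using f g by simp
next
  note h = pdD[OF S H]
  assume f: "f \<in> pd_edges H \<and> f \<in> F_L p \<tau> \<and> tau_e \<tau> f \<in> pd_edges H \<and> {f} \<in> eclasses H"
  have "tau_e \<tau> f \<in> F_R p \<tau>" using FL_to_FR[OF S] f by blast
  moreover have "f = tau_e \<tau> (tau_e \<tau> f)" using h(8) f by simp
  ultimately have "f \<in> tau_e \<tau> ` (pd_edges H \<inter> F_R p \<tau>)" using f by blast
  then show "f \<in> pd_EE p \<tau> H" unfolding pd_EE_def using f by blast
qed

lemma LL_mem: "i \<in> pd_LL q H \<longleftrightarrow> i \<in> {1..q} \<and> {i} \<in> vclasses H"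
  unfolding pd_LL_def by blast

lemma quad_eq: "pd_quad p q \<tau> H = (pd_edges H, pd_LL q H, pd_EE p \<tau> H)"
  unfolding pd_quad_def by simp

lemma vsingle_iff:
  assumes S: "pd_setup p q \<tau>" and H: "is_pdCG p \<tau> H" and i: "i \<in> {1..p}"
  shows "{i} \<in> vclasses H \<longleftrightarrow> (if i \<le> q then i \<in> pd_LL q H else \<tau> i \<in> pd_LL q H)"
proof (cases "i \<le> q")
  case True then show ?thesis using i unfolding LL_mem by simp
next
  case False
  note h = pdD[OF S H]
  have ti: "\<tau> i \<in> {1..q}" "\<tau> i \<in> {1..p}" using tau_R[OF S, of i] False i setupD(2)[OF S] by auto
  have tti: "\<tau> (\<tau> i) = i" using tau_props(2)[OF S i] .
  have "{i} \<in> vclasses H \<longleftrightarrow> {\<tau> i} \<in> vclasses H"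
    using g_twin[OF h(1) h(2) h(7) i ti(2)] g_twin[OF h(1) h(2) h(7) ti(2)] tti i by auto
  then show ?thesis using False ti unfolding LL_mem by simp
qed

lemma esingle_iff:
  assumes S: "pd_setup p q \<tau>" and H: "is_pdCG p \<tau> H" and e: "e \<in> pd_edges H"
  shows "{e} \<in> eclasses H \<longleftrightarrow> (tau_e \<tau> e \<notin> pd_edges H \<or> tau_e \<tau> e = e
           \<or> (e \<in> F_L p \<tau> \<and> e \<in> pd_EE p \<tau> H) \<or> (e \<notin> F_L p \<tau> \<and> tau_e \<tau> e \<in> pd_EE p \<tau> H))"
proof -
  note h = pdD[OF S H]
  have eF: "e \<in> F_V p" using e h(3) by blast
  have tt: "tau_e \<tau> (tau_e \<tau> e) = e" using h(8) e by blast
  show ?thesis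
  proof (cases "tau_e \<tau> e \<notin> pd_edges H \<or> tau_e \<tau> e = e")
    case True
    have "{e} \<in> eclasses H"
    proof (rule ccontr)
      assume n: "{e} \<notin> eclasses H"
      then have pe: "{e, tau_e \<tau> e} \<in> eclasses H" using g_cls[OF h(4) h(5) h(8) e] by blast
      then have "tau_e \<tau> e \<in> pd_edges H" unfolding pd_edges_def by blast
      then have "tau_e \<tau> e = e" using True by blast
      then show False using n pe by simp
    qed
    then show ?thesis using True by blast
  next
    case False
    then have te: "tau_e \<tau> e \<in> pd_edges H" "tau_e \<tau> e \<noteq> e" by blast+
    have tw: "{e} \<in> eclasses H \<longleftrightarrow> {tau_e \<tau> e} \<in> eclasses H"
      using g_twin[OF h(4) h(5) h(8) e te(1)] g_twin[OF h(4) h(5) h(8) te(1)] tt e by auto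
    show ?thesis
    proof (cases "e \<in> F_L p \<tau>")
      case True
      then show ?thesis using EE_mem[OF S H, of e] e te by blast
    next
      case nL: False
      then have "e \<in> F_R p \<tau>" using FV_cases[OF S eF] te(2) by blast
      then have "tau_e \<tau> e \<in> F_L p \<tau>" using FR_to_FL[OF S] by blast
      then show ?thesis using EE_mem[OF S H, of "tau_e \<tau> e"] e te tw tt nL by auto
    qed
  qed
qed

lemma quad_inj:
  assumes S: "pd_setup p q \<tau>" and H: "is_pdCG p \<tau> H" and H': "is_pdCG p \<tau> H'"
    and eq: "pd_quad p q \<tau> H = pd_quad p q \<tau> H'"
  shows "H = H'"
proof -
  note h = pdD[OF S H] and h' = pdD[OF S H']
  have E: "pd_edges H = pd_edges H'" and L: "pd_LL q H = pd_LL q H'" and EE: "pd_EE p \<tau> H = pd_EE p \<tau> H'"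
    using eq unfolding quad_eq by simp_all
  have v: "vclasses H = vclasses H'"
  proof (rule g_eq[OF h(1) h(2) h'(1) h'(2) h(7)])
    show "\<forall>x\<in>{1..p}. ({x} \<in> vclasses H) = ({x} \<in> vclasses H')"
      using vsingle_iff[OF S H] vsingle_iff[OF S H'] L by simp
  qed
  have e: "eclasses H = eclasses H'"
  proof (rule g_eq[OF h(4) h(5) h'(4)[folded E] h'(5) h(8)])
    show "\<forall>x\<in>pd_edges H. ({x} \<in> eclasses H) = ({x} \<in> eclasses H')"
    proof
      fix x assume x: "x \<in> pd_edges H"
      show "({x} \<in> eclasses H) = ({x} \<in> eclasses H')"
        unfolding esingle_iff[OF S H x] esingle_iff[OF S H' x[unfolded E]] E EE ..
    qed
  qed
  show ?thesis using cg_eq[OF v e] .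
qed


context
  fixes p q :: nat and \<tau> :: "nat \<Rightarrow> nat" and G :: cgraph
  assumes S: "pd_setup p q \<tau>" and G: "is_pdCG p \<tau> G"
begin

lemma quad_vmerge:
  assumes i: "i \<in> {1..p}" and s: "{i} \<in> vclasses G" "{\<tau> i} \<in> vclasses G"
  shows "pd_quad p q \<tau> (vmerge \<tau> G i) = (pd_edges G, pd_LL q G - {i, \<tau> i}, pd_EE p \<tau> G)"
proof -
  note g = pdD[OF S G]
  have H: "is_pdCG p \<tau> (vmerge \<tau> G i)" using step_vmerge[OF S G i s] by blast
  have ne: "i \<noteq> \<tau> i" using tau_props(3)[OF S i] by simp
  have E: "pd_edges (vmerge \<tau> G i) = pd_edges G" unfolding pd_edges_def by simp
  have sj: "{j} \<in> pmerge \<tau> (vclasses G) i \<longleftrightarrow> {j} \<in> vclasses G \<and> j \<noteq> i \<and> j \<noteq> \<tau> i" for j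
  proof
    assume "{j} \<in> pmerge \<tau> (vclasses G) i"
    then consider "{j} = {i, \<tau> i}" | "{j} \<in> vclasses G" "{j} \<noteq> {i}" "{j} \<noteq> {\<tau> i}" unfolding pmerge_def by blast
    then show "{j} \<in> vclasses G \<and> j \<noteq> i \<and> j \<noteq> \<tau> i"
    proof cases
      case 1
      then have "i = j" "\<tau> i = j" by (metis insertI1 singletonD, metis insertI1 insert_commute singletonD)
      then show ?thesis using ne by simp
    qed simp
  next
    assume "{j} \<in> vclasses G \<and> j \<noteq> i \<and> j \<noteq> \<tau> i"
    then show "{j} \<in> pmerge \<tau> (vclasses G) i" unfolding pmerge_def by auto
  qed
  have L: "pd_LL q (vmerge \<tau> G i) = pd_LL q G - {i, \<tau> i}"
    unfolding pd_LL_def step_sel sj by blast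
  have EE: "pd_EE p \<tau> (vmerge \<tau> G i) = pd_EE p \<tau> G"
    unfolding pd_EE_def pd_edges_def by simp
  show ?thesis unfolding quad_eq E L EE ..
qed

lemma quad_emerge:
  assumes e: "e \<in> pd_edges G" and s: "{e} \<in> eclasses G" "{tau_e \<tau> e} \<in> eclasses G" and ne: "e \<noteq> tau_e \<tau> e"
  shows "pd_quad p q \<tau> (emerge \<tau> G e) = (pd_edges G, pd_LL q G, pd_EE p \<tau> G - {e, tau_e \<tau> e})"
proof -
  note g = pdD[OF S G]
  have H: "is_pdCG p \<tau> (emerge \<tau> G e)" using step_emerge[OF S G e s ne] by blast
  note pm = pmerge_props[where \<sigma>="tau_e \<tau>", OF g(4) s ne]
  have E: "pd_edges (emerge \<tau> G e) = pd_edges G" using pm(1) unfolding pd_edges_def part_iff by simp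
  have sj: "{j} \<in> pmerge (tau_e \<tau>) (eclasses G) e \<longleftrightarrow> {j} \<in> eclasses G \<and> j \<noteq> e \<and> j \<noteq> tau_e \<tau> e" for j
  proof
    assume "{j} \<in> pmerge (tau_e \<tau>) (eclasses G) e"
    then consider "{j} = {e, tau_e \<tau> e}" | "{j} \<in> eclasses G" "{j} \<noteq> {e}" "{j} \<noteq> {tau_e \<tau> e}" unfolding pmerge_def by blast
    then show "{j} \<in> eclasses G \<and> j \<noteq> e \<and> j \<noteq> tau_e \<tau> e"
    proof cases
      case 1
      then have "e = j" "tau_e \<tau> e = j" by (metis insertI1 singletonD, metis insertI1 insert_commute singletonD)
      then show ?thesis using ne by simp
    qed simp
  next
    assume "{j} \<in> eclasses G \<and> j \<noteq> e \<and> j \<noteq> tau_e \<tau> e"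
    then show "{j} \<in> pmerge (tau_e \<tau>) (eclasses G) e" unfolding pmerge_def by auto
  qed
  have EE: "pd_EE p \<tau> (emerge \<tau> G e) = pd_EE p \<tau> G - {e, tau_e \<tau> e}"
    unfolding pd_EE_def E step_sel sj by blast
  have L: "pd_LL q (emerge \<tau> G e) = pd_LL q G" unfolding pd_LL_def by simp
  show ?thesis unfolding quad_eq E L EE ..
qed

lemma quad_eremove:
  assumes C: "C \<in> eclasses G"
  shows "pd_quad p q \<tau> (eremove G C) = (pd_edges G - C, pd_LL q G,
           {f \<in> pd_EE p \<tau> G. f \<notin> C \<and> tau_e \<tau> f \<notin> C})"
proof -
  note g = pdD[OF S G]
  have H: "is_pdCG p \<tau> (eremove G C)" using step_eremove[OF S G C] by blast
  have E: "pd_edges (eremove G C) = pd_edges G - C" using part_remove[OF g(4) C] unfolding pd_edges_def by simp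
  have L: "pd_LL q (eremove G C) = pd_LL q G" unfolding pd_LL_def by simp
  have sC: "{f} \<in> eclasses G - {C} \<longleftrightarrow> {f} \<in> eclasses G \<and> f \<notin> C" if "f \<in> pd_edges G" for f
  proof
    assume a: "{f} \<in> eclasses G - {C}"
    have "f \<notin> C"
    proof
      assume "f \<in> C"
      then have "{f} = C" using part_disj[OF g(4) _ C, of "{f}" f] a by blast
      then show False using a by blast
    qed
    then show "{f} \<in> eclasses G \<and> f \<notin> C" using a by blast
  next
    assume "{f} \<in> eclasses G \<and> f \<notin> C" then show "{f} \<in> eclasses G - {C}" by blast
  qed
  have EE: "pd_EE p \<tau> (eremove G C) = {f \<in> pd_EE p \<tau> G. f \<notin> C \<and> tau_e \<tau> f \<notin> C}"
  proof (rule set_eqI)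
    fix f
    show "f \<in> pd_EE p \<tau> (eremove G C) \<longleftrightarrow> f \<in> {f \<in> pd_EE p \<tau> G. f \<notin> C \<and> tau_e \<tau> f \<notin> C}"
      unfolding EE_mem[OF S H] EE_mem[OF S G] E step_sel using sC[of f] by blast
  qed
  show ?thesis unfolding quad_eq E L EE ..
qed


lemma fix_form2:
  assumes e: "e \<in> F_V p" and f: "tau_e \<tau> e = e"
  shows "fst e \<in> {1..p} \<and> e = (fst e, \<tau> (fst e))"
proof -
  obtain a b where ab: "e = (a,b)" by (cases e)
  have h: "1 \<le> a" "a < b" "b \<le> p" using e ab FV_mem by auto
  have ta: "\<tau> a \<noteq> a" using tau_props(3)[OF S] h by simp
  have "min (\<tau> a) (\<tau> b) = a" "max (\<tau> a) (\<tau> b) = b" using f unfolding ab tau_e_pair by simp_all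
  then have "\<tau> a = b" using ta by (metis max_def min_def)
  then show ?thesis using ab h by simp
qed

lemma step_quad:
  assumes st: "is_step p \<tau> H G"
  shows "(\<exists>i\<in>pd_LL q G. pd_quad p q \<tau> H = (pd_edges G, pd_LL q G - {i}, pd_EE p \<tau> G))
    \<or> (\<exists>e\<in>pd_EE p \<tau> G. pd_quad p q \<tau> H = (pd_edges G, pd_LL q G, pd_EE p \<tau> G - {e}))
    \<or> (\<exists>e\<in>pd_EE p \<tau> G. pd_quad p q \<tau> H = (pd_edges G - {e}, pd_LL q G, pd_EE p \<tau> G - {e}))
    \<or> (\<exists>e\<in>pd_EE p \<tau> G. pd_quad p q \<tau> H = (pd_edges G - {tau_e \<tau> e}, pd_LL q G, pd_EE p \<tau> G - {e}))
    \<or> (\<exists>e. e \<in> pd_edges G \<and> tau_e \<tau> e \<notin> pd_edges G \<and> pd_quad p q \<tau> H = (pd_edges G - {e}, pd_LL q G, pd_EE p \<tau> G))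
    \<or> (\<exists>i. i \<in> {1..p} \<and> (i, \<tau> i) \<in> pd_edges G \<and> pd_quad p q \<tau> H = (pd_edges G - {(i, \<tau> i)}, pd_LL q G, pd_EE p \<tau> G))
    \<or> (\<exists>e. e \<in> pd_edges G \<and> tau_e \<tau> e \<in> pd_edges G \<and> e \<noteq> tau_e \<tau> e \<and> e \<notin> pd_EE p \<tau> G \<and> tau_e \<tau> e \<notin> pd_EE p \<tau> G
          \<and> pd_quad p q \<tau> H = (pd_edges G - {e, tau_e \<tau> e}, pd_LL q G, pd_EE p \<tau> G))"
  using st unfolding is_step_def
proof (elim disjE bexE conjE)
  note g = pdD[OF S G]
  fix i assume i: "i \<in> {1..p}" and s: "{i} \<in> vclasses G" "{\<tau> i} \<in> vclasses G" and H: "H = vmerge \<tau> G i"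
  have Q: "pd_quad p q \<tau> H = (pd_edges G, pd_LL q G - {i, \<tau> i}, pd_EE p \<tau> G)"
    using quad_vmerge[OF i s] H by simp
  have c: "if i \<le> q then i \<in> pd_LL q G else \<tau> i \<in> pd_LL q G" using vsingle_iff[OF S G i] s by simp
  have Lq: "pd_LL q G \<subseteq> {1..q}" unfolding pd_LL_def by blast
  show ?thesis
  proof (cases "i \<le> q")
    case True
    then have "q < \<tau> i" using tau_L[OF S] i by simp
    then have "pd_LL q G - {i, \<tau> i} = pd_LL q G - {i}" using Lq by auto
    then show ?thesis using Q c True by auto
  next
    case False
    then have "pd_LL q G - {i, \<tau> i} = pd_LL q G - {\<tau> i}" using Lq by auto
    then show ?thesis using Q c False by auto
  qed
next
  note g = pdD[OF S G]
  fix e assume e: "e \<in> pd_edges G" and s: "{e} \<in> eclasses G" "{tau_e \<tau> e} \<in> eclasses G"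
    and ne: "e \<noteq> tau_e \<tau> e" and H: "H = emerge \<tau> G e"
  have Q: "pd_quad p q \<tau> H = (pd_edges G, pd_LL q G, pd_EE p \<tau> G - {e, tau_e \<tau> e})"
    using quad_emerge[OF e s ne] H by simp
  have eF: "e \<in> F_V p" using e g(3) by blast
  have te: "tau_e \<tau> e \<in> pd_edges G" using s(2) unfolding pd_edges_def by blast
  have tt: "tau_e \<tau> (tau_e \<tau> e) = e" using g(8) e by blast
  show ?thesis
  proof (cases "e \<in> F_L p \<tau>")
    case True
    then have "tau_e \<tau> e \<notin> F_L p \<tau>" using FL_to_FR[OF S] FL_FR_disj by blast
    then have "tau_e \<tau> e \<notin> pd_EE p \<tau> G" using EE_mem[OF S G] by blast
    moreover have "e \<in> pd_EE p \<tau> G" using EE_mem[OF S G] True e te s by blast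
    ultimately show ?thesis using Q by auto
  next
    case False
    then have "e \<in> F_R p \<tau>" using FV_cases[OF S eF] ne by auto
    then have "tau_e \<tau> e \<in> F_L p \<tau>" using FR_to_FL[OF S] by blast
    then have "tau_e \<tau> e \<in> pd_EE p \<tau> G" using EE_mem[OF S G] tt e te s by simp
    moreover have "e \<notin> pd_EE p \<tau> G" using EE_mem[OF S G] False by blast
    ultimately show ?thesis using Q by auto
  qed
next
  note g = pdD[OF S G]
  fix C assume C: "C \<in> eclasses G" and H: "H = eremove G C"
  have Q: "pd_quad p q \<tau> H = (pd_edges G - C, pd_LL q G, {f \<in> pd_EE p \<tau> G. f \<notin> C \<and> tau_e \<tau> f \<notin> C})"
    using quad_eremove[OF C] H by simp
  have EEm: "f \<in> pd_EE p \<tau> G \<Longrightarrow> f \<in> pd_edges G \<and> f \<in> F_L p \<tau> \<and> tau_e \<tau> f \<in> pd_edges G \<and> {f} \<in> eclasses G" for f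
    using EE_mem[OF S G] by blast
  have inv: "f \<in> pd_edges G \<Longrightarrow> tau_e \<tau> (tau_e \<tau> f) = f" for f using g(8) by blast
  have d: "(\<exists>x\<in>pd_edges G. C = {x} \<and> {x} \<in> eclasses G) \<or> (\<exists>x\<in>pd_edges G. C = {x, tau_e \<tau> x} \<and> x \<noteq> tau_e \<tau> x \<and> {x} \<notin> eclasses G)"
    using g_mem[OF g(4) g(5) g(8)] C by blast
  then show ?thesis
  proof (elim disjE bexE conjE)
    fix e assume e: "e \<in> pd_edges G" and Ce: "C = {e}" and s: "{e} \<in> eclasses G"
    have eF: "e \<in> F_V p" using e g(3) by blast
    show ?thesis
    proof (cases "tau_e \<tau> e = e")
      case True
      have eL: "e \<notin> F_L p \<tau>" using fix_not_FL[OF True S] by blast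
      have "{f \<in> pd_EE p \<tau> G. f \<notin> C \<and> tau_e \<tau> f \<notin> C} = pd_EE p \<tau> G"
      proof (intro set_eqI iffI)
        fix f assume f: "f \<in> pd_EE p \<tau> G"
        then have "f \<noteq> e" using EEm eL by blast
        moreover have "tau_e \<tau> f \<noteq> e" using inv[of f] EEm[OF f] True \<open>f \<noteq> e\<close> by metis
        ultimately show "f \<in> {f \<in> pd_EE p \<tau> G. f \<notin> C \<and> tau_e \<tau> f \<notin> C}" using f Ce by simp
      qed simp
      moreover obtain a where a: "a \<in> {1..p}" "e = (a, \<tau> a)" using fix_form2[OF eF True] by blast
      ultimately have "pd_quad p q \<tau> H = (pd_edges G - {(a, \<tau> a)}, pd_LL q G, pd_EE p \<tau> G)" using Q Ce a by simp
      then have "\<exists>i. i \<in> {1..p} \<and> (i, \<tau> i) \<in> pd_edges G \<and> pd_quad p q \<tau> H = (pd_edges G - {(i, \<tau> i)}, pd_LL q G, pd_EE p \<tau> G)"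
        using a e by blast
      then show ?thesis by blast
    next
      case nfix: False
      show ?thesis
      proof (cases "tau_e \<tau> e \<in> pd_edges G")
        case False
        have "{f \<in> pd_EE p \<tau> G. f \<notin> C \<and> tau_e \<tau> f \<notin> C} = pd_EE p \<tau> G"
        proof (intro set_eqI iffI)
          fix f assume f: "f \<in> pd_EE p \<tau> G"
          then have "f \<noteq> e" using EEm False by blast
          moreover have "tau_e \<tau> f \<noteq> e" using inv[of f] EEm[OF f] False by metis
          ultimately show "f \<in> {f \<in> pd_EE p \<tau> G. f \<notin> C \<and> tau_e \<tau> f \<notin> C}" using f Ce by simp
        qed simp
        then have "pd_quad p q \<tau> H = (pd_edges G - {e}, pd_LL q G, pd_EE p \<tau> G)" using Q Ce by simp
        then have "\<exists>e. e \<in> pd_edges G \<and> tau_e \<tau> e \<notin> pd_edges G \<and> pd_quad p q \<tau> H = (pd_edges G - {e}, pd_LL q G, pd_EE p \<tau> G)"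
          using e False by blast
        then show ?thesis by blast
      next
        case teE: True
        have s2: "{tau_e \<tau> e} \<in> eclasses G" using g_twin[OF g(4) g(5) g(8) e teE s] .
        show ?thesis
        proof (cases "e \<in> F_L p \<tau>")
          case True
          have eEE: "e \<in> pd_EE p \<tau> G" using EE_mem[OF S G] True e teE s by blast
          have "tau_e \<tau> e \<notin> F_L p \<tau>" using FL_to_FR[OF S True] FL_FR_disj by blast
          have "{f \<in> pd_EE p \<tau> G. f \<notin> C \<and> tau_e \<tau> f \<notin> C} = pd_EE p \<tau> G - {e}"
          proof (intro set_eqI iffI)
            fix f assume f: "f \<in> pd_EE p \<tau> G - {e}"
            have "tau_e \<tau> f \<noteq> e"
            proof
              assume "tau_e \<tau> f = e"
              then have "f = tau_e \<tau> e" using inv[of f] EEm[of f] f by auto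
              then show False using EEm[of f] f \<open>tau_e \<tau> e \<notin> F_L p \<tau>\<close> by blast
            qed
            then show "f \<in> {f \<in> pd_EE p \<tau> G. f \<notin> C \<and> tau_e \<tau> f \<notin> C}" using f Ce by simp
          qed (use Ce in simp)
          then have "pd_quad p q \<tau> H = (pd_edges G - {e}, pd_LL q G, pd_EE p \<tau> G - {e})" using Q Ce by simp
          then have "\<exists>e\<in>pd_EE p \<tau> G. pd_quad p q \<tau> H = (pd_edges G - {e}, pd_LL q G, pd_EE p \<tau> G - {e})"
            using eEE by blast
          then show ?thesis by blast
        next
          case False
          then have "e \<in> F_R p \<tau>" using FV_cases[OF S eF] nfix by blast
          then have tL: "tau_e \<tau> e \<in> F_L p \<tau>" using FR_to_FL[OF S] by blast
          have tt: "tau_e \<tau> (tau_e \<tau> e) = e" using inv e by blast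
          have tEE: "tau_e \<tau> e \<in> pd_EE p \<tau> G" using EE_mem[OF S G] tL teE s2 tt e by simp
          have "{f \<in> pd_EE p \<tau> G. f \<notin> C \<and> tau_e \<tau> f \<notin> C} = pd_EE p \<tau> G - {tau_e \<tau> e}"
          proof (intro set_eqI iffI)
            fix f assume f: "f \<in> pd_EE p \<tau> G - {tau_e \<tau> e}"
            have "f \<noteq> e" using EEm[of f] f False by blast
            moreover have "tau_e \<tau> f \<noteq> e"
            proof
              assume "tau_e \<tau> f = e"
              then have "f = tau_e \<tau> e" using inv[of f] EEm[of f] f by auto
              then show False using f by blast
            qed
            ultimately show "f \<in> {f \<in> pd_EE p \<tau> G. f \<notin> C \<and> tau_e \<tau> f \<notin> C}" using f Ce by simp
          next
            fix f assume f: "f \<in> {f \<in> pd_EE p \<tau> G. f \<notin> C \<and> tau_e \<tau> f \<notin> C}"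
            then have "f \<noteq> tau_e \<tau> e" using tt Ce by auto
            then show "f \<in> pd_EE p \<tau> G - {tau_e \<tau> e}" using f by simp
          qed
          moreover have "pd_edges G - C = pd_edges G - {tau_e \<tau> (tau_e \<tau> e)}" using tt Ce by simp
          ultimately have "pd_quad p q \<tau> H = (pd_edges G - {tau_e \<tau> (tau_e \<tau> e)}, pd_LL q G, pd_EE p \<tau> G - {tau_e \<tau> e})"
            using Q by simp
          then have "\<exists>e\<in>pd_EE p \<tau> G. pd_quad p q \<tau> H = (pd_edges G - {tau_e \<tau> e}, pd_LL q G, pd_EE p \<tau> G - {e})"
            using tEE by blast
          then show ?thesis by blast
        qed
      qed
    qed
  next
    fix e assume e: "e \<in> pd_edges G" and Ce: "C = {e, tau_e \<tau> e}" and ne: "e \<noteq> tau_e \<tau> e"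
      and ns: "{e} \<notin> eclasses G"
    have ns2: "{tau_e \<tau> e} \<notin> eclasses G" using g_pair_nsingle(2)[where \<sigma>="tau_e \<tau>", OF g(4)] C Ce ne by blast
    have teE: "tau_e \<tau> e \<in> pd_edges G" using C Ce unfolding pd_edges_def by blast
    have tt: "tau_e \<tau> (tau_e \<tau> e) = e" using inv e by blast
    have "{f \<in> pd_EE p \<tau> G. f \<notin> C \<and> tau_e \<tau> f \<notin> C} = pd_EE p \<tau> G"
    proof (intro set_eqI iffI)
      fix f assume f: "f \<in> pd_EE p \<tau> G"
      then have fs: "{f} \<in> eclasses G" "f \<in> pd_edges G" using EEm by blast+
      then have "f \<noteq> e" "f \<noteq> tau_e \<tau> e" using ns ns2 by blast+
      moreover have "tau_e \<tau> f \<noteq> e" using inv[OF fs(2)] \<open>f \<noteq> tau_e \<tau> e\<close> by metis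
      moreover have "tau_e \<tau> f \<noteq> tau_e \<tau> e" using inv[OF fs(2)] tt \<open>f \<noteq> e\<close> by metis
      ultimately show "f \<in> {f \<in> pd_EE p \<tau> G. f \<notin> C \<and> tau_e \<tau> f \<notin> C}" using f Ce by simp
    qed simp
    moreover have "e \<notin> pd_EE p \<tau> G" "tau_e \<tau> e \<notin> pd_EE p \<tau> G" using EEm ns ns2 by blast+
    ultimately have "pd_quad p q \<tau> H = (pd_edges G - {e, tau_e \<tau> e}, pd_LL q G, pd_EE p \<tau> G)"
      and "e \<notin> pd_EE p \<tau> G" "tau_e \<tau> e \<notin> pd_EE p \<tau> G" using Q Ce by simp_all
    then have "\<exists>e. e \<in> pd_edges G \<and> tau_e \<tau> e \<in> pd_edges G \<and> e \<noteq> tau_e \<tau> e \<and> e \<notin> pd_EE p \<tau> G \<and> tau_e \<tau> e \<notin> pd_EE p \<tau> G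
          \<and> pd_quad p q \<tau> H = (pd_edges G - {e, tau_e \<tau> e}, pd_LL q G, pd_EE p \<tau> G)"
      using e teE ne by blast
    then show ?thesis by blast
  qed
qed


lemma qs1:
  assumes i: "i \<in> pd_LL q G"
  shows "\<exists>H. is_step p \<tau> H G \<and> pd_quad p q \<tau> H = (pd_edges G, pd_LL q G - {i}, pd_EE p \<tau> G)"
proof -
  note g = pdD[OF S G]
  have iq: "i \<in> {1..q}" "{i} \<in> vclasses G" using i unfolding LL_mem by blast+
  have ip: "i \<in> {1..p}" using iq setupD(2)[OF S] by auto
  have ti: "\<tau> i \<in> {1..p}" "q < \<tau> i" using tau_props(1)[OF S ip] tau_L[OF S] iq by auto
  have s2: "{\<tau> i} \<in> vclasses G" using g_twin[OF g(1) g(2) g(7) ip ti(1) iq(2)] .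
  have "pd_LL q G - {i, \<tau> i} = pd_LL q G - {i}" using ti(2) unfolding pd_LL_def by auto
  then have "pd_quad p q \<tau> (vmerge \<tau> G i) = (pd_edges G, pd_LL q G - {i}, pd_EE p \<tau> G)"
    using quad_vmerge[OF ip iq(2) s2] by simp
  moreover have "is_step p \<tau> (vmerge \<tau> G i) G" unfolding is_step_def using ip iq(2) s2 by blast
  ultimately show ?thesis by blast
qed

lemma EE_facts:
  assumes e: "e \<in> pd_EE p \<tau> G"
  shows "e \<in> pd_edges G" "e \<in> F_L p \<tau>" "tau_e \<tau> e \<in> pd_edges G" "{e} \<in> eclasses G"
    "{tau_e \<tau> e} \<in> eclasses G" "e \<noteq> tau_e \<tau> e" "tau_e \<tau> e \<notin> pd_EE p \<tau> G"
    "tau_e \<tau> e \<notin> F_L p \<tau>" "tau_e \<tau> (tau_e \<tau> e) = e"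
proof -
  note g = pdD[OF S G]
  show a: "e \<in> pd_edges G" "e \<in> F_L p \<tau>" "tau_e \<tau> e \<in> pd_edges G" "{e} \<in> eclasses G"
    using EE_mem[OF S G] e by blast+
  show "{tau_e \<tau> e} \<in> eclasses G" using g_twin[OF g(4) g(5) g(8) a(1) a(3) a(4)] .
  show "e \<noteq> tau_e \<tau> e" using FL_nfix[OF S a(2)] by metis
  show n: "tau_e \<tau> e \<notin> F_L p \<tau>" using FL_to_FR[OF S a(2)] FL_FR_disj by blast
  then show "tau_e \<tau> e \<notin> pd_EE p \<tau> G" using EE_mem[OF S G] by blast
  show "tau_e \<tau> (tau_e \<tau> e) = e" using g(8) a(1) by blast
qed

lemma qs2:
  assumes e: "e \<in> pd_EE p \<tau> G"
  shows "\<exists>H. is_step p \<tau> H G \<and> pd_quad p q \<tau> H = (pd_edges G, pd_LL q G, pd_EE p \<tau> G - {e})"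
proof -
  note f = EE_facts[OF e]
  have "pd_EE p \<tau> G - {e, tau_e \<tau> e} = pd_EE p \<tau> G - {e}" using f(7) by blast
  then have "pd_quad p q \<tau> (emerge \<tau> G e) = (pd_edges G, pd_LL q G, pd_EE p \<tau> G - {e})"
    using quad_emerge[OF f(1) f(4) f(5) f(6)] by simp
  moreover have "is_step p \<tau> (emerge \<tau> G e) G" unfolding is_step_def using f(1,4,5,6) by blast
  ultimately show ?thesis by blast
qed

lemma qs3:
  assumes e: "e \<in> pd_EE p \<tau> G"
  shows "\<exists>H. is_step p \<tau> H G \<and> pd_quad p q \<tau> H = (pd_edges G - {e}, pd_LL q G, pd_EE p \<tau> G - {e})"
proof -
  note f = EE_facts[OF e]
  note g = pdD[OF S G]
  have "{x \<in> pd_EE p \<tau> G. x \<notin> {e} \<and> tau_e \<tau> x \<notin> {e}} = pd_EE p \<tau> G - {e}"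
  proof (intro set_eqI iffI)
    fix x assume x: "x \<in> pd_EE p \<tau> G - {e}"
    have "tau_e \<tau> x \<noteq> e"
    proof
      assume "tau_e \<tau> x = e"
      then have "x = tau_e \<tau> e" using g(8) EE_mem[OF S G, of x] x by auto
      then show False using x f(7) by blast
    qed
    then show "x \<in> {x \<in> pd_EE p \<tau> G. x \<notin> {e} \<and> tau_e \<tau> x \<notin> {e}}" using x by simp
  qed simp
  then have "pd_quad p q \<tau> (eremove G {e}) = (pd_edges G - {e}, pd_LL q G, pd_EE p \<tau> G - {e})"
    using quad_eremove[OF f(4)] by simp
  moreover have "is_step p \<tau> (eremove G {e}) G" unfolding is_step_def using f(4) by blast
  ultimately show ?thesis by blast
qed

lemma qs4:
  assumes e: "e \<in> pd_EE p \<tau> G"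
  shows "\<exists>H. is_step p \<tau> H G \<and> pd_quad p q \<tau> H = (pd_edges G - {tau_e \<tau> e}, pd_LL q G, pd_EE p \<tau> G - {e})"
proof -
  note f = EE_facts[OF e]
  note g = pdD[OF S G]
  have "{x \<in> pd_EE p \<tau> G. x \<notin> {tau_e \<tau> e} \<and> tau_e \<tau> x \<notin> {tau_e \<tau> e}} = pd_EE p \<tau> G - {e}"
  proof (intro set_eqI iffI)
    fix x assume x: "x \<in> pd_EE p \<tau> G - {e}"
    have "tau_e \<tau> x \<noteq> tau_e \<tau> e"
    proof
      assume "tau_e \<tau> x = tau_e \<tau> e"
      then have "tau_e \<tau> (tau_e \<tau> x) = e" using f(9) by simp
      then have "x = e" using g(8) EE_mem[OF S G, of x] x by auto
      then show False using x by blast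
    qed
    moreover have "x \<noteq> tau_e \<tau> e" using x f(7) by blast
    ultimately show "x \<in> {x \<in> pd_EE p \<tau> G. x \<notin> {tau_e \<tau> e} \<and> tau_e \<tau> x \<notin> {tau_e \<tau> e}}" using x by simp
  next
    fix x assume x: "x \<in> {x \<in> pd_EE p \<tau> G. x \<notin> {tau_e \<tau> e} \<and> tau_e \<tau> x \<notin> {tau_e \<tau> e}}"
    then have "x \<noteq> e" by auto
    then show "x \<in> pd_EE p \<tau> G - {e}" using x by simp
  qed
  then have "pd_quad p q \<tau> (eremove G {tau_e \<tau> e}) = (pd_edges G - {tau_e \<tau> e}, pd_LL q G, pd_EE p \<tau> G - {e})"
    using quad_eremove[OF f(5)] by simp
  moreover have "is_step p \<tau> (eremove G {tau_e \<tau> e}) G" unfolding is_step_def using f(5) by blast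
  ultimately show ?thesis by blast
qed

lemma qs5:
  assumes e: "e \<in> pd_edges G" and te: "tau_e \<tau> e \<notin> pd_edges G"
  shows "\<exists>H. is_step p \<tau> H G \<and> pd_quad p q \<tau> H = (pd_edges G - {e}, pd_LL q G, pd_EE p \<tau> G)"
proof -
  note g = pdD[OF S G]
  have s: "{e} \<in> eclasses G" using esingle_iff[OF S G e] te by blast
  have "{x \<in> pd_EE p \<tau> G. x \<notin> {e} \<and> tau_e \<tau> x \<notin> {e}} = pd_EE p \<tau> G"
  proof (intro set_eqI iffI)
    fix x assume x: "x \<in> pd_EE p \<tau> G"
    have xf: "x \<in> pd_edges G" "tau_e \<tau> x \<in> pd_edges G" using EE_mem[OF S G] x by blast+
    have "x \<noteq> e" using xf te by blast
    moreover have "tau_e \<tau> x \<noteq> e" using g(8) xf te by metis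
    ultimately show "x \<in> {x \<in> pd_EE p \<tau> G. x \<notin> {e} \<and> tau_e \<tau> x \<notin> {e}}" using x by simp
  qed simp
  then have "pd_quad p q \<tau> (eremove G {e}) = (pd_edges G - {e}, pd_LL q G, pd_EE p \<tau> G)"
    using quad_eremove[OF s] by simp
  moreover have "is_step p \<tau> (eremove G {e}) G" unfolding is_step_def using s by blast
  ultimately show ?thesis by blast
qed

lemma qs6:
  assumes i: "i \<in> {1..p}" and e: "(i, \<tau> i) \<in> pd_edges G"
  shows "\<exists>H. is_step p \<tau> H G \<and> pd_quad p q \<tau> H = (pd_edges G - {(i, \<tau> i)}, pd_LL q G, pd_EE p \<tau> G)"
proof -
  note g = pdD[OF S G]
  have "(i, \<tau> i) \<in> F_V p" using e g(3) by blast
  then have lt: "i < \<tau> i" using FV_mem by blast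
  have fx: "tau_e \<tau> (i, \<tau> i) = (i, \<tau> i)" using fix_form(2)[OF S i lt] .
  have s: "{(i, \<tau> i)} \<in> eclasses G" using esingle_iff[OF S G e] fx by blast
  have nL: "(i, \<tau> i) \<notin> F_L p \<tau>" using fix_not_FL[OF fx S] by blast
  have "{x \<in> pd_EE p \<tau> G. x \<notin> {(i, \<tau> i)} \<and> tau_e \<tau> x \<notin> {(i, \<tau> i)}} = pd_EE p \<tau> G"
  proof (intro set_eqI iffI)
    fix x assume x: "x \<in> pd_EE p \<tau> G"
    have xf: "x \<in> pd_edges G" "x \<in> F_L p \<tau>" using EE_mem[OF S G] x by blast+
    have "x \<noteq> (i, \<tau> i)" using xf nL by blast
    moreover have "tau_e \<tau> x \<noteq> (i, \<tau> i)" using g(8) xf fx \<open>x \<noteq> (i, \<tau> i)\<close> by metis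
    ultimately show "x \<in> {x \<in> pd_EE p \<tau> G. x \<notin> {(i, \<tau> i)} \<and> tau_e \<tau> x \<notin> {(i, \<tau> i)}}" using x by simp
  qed simp
  then have "pd_quad p q \<tau> (eremove G {(i, \<tau> i)}) = (pd_edges G - {(i, \<tau> i)}, pd_LL q G, pd_EE p \<tau> G)"
    using quad_eremove[OF s] by simp
  moreover have "is_step p \<tau> (eremove G {(i, \<tau> i)}) G" unfolding is_step_def using s by blast
  ultimately show ?thesis by blast
qed

lemma qs7:
  assumes e: "e \<in> pd_edges G" and te: "tau_e \<tau> e \<in> pd_edges G" and ne: "e \<noteq> tau_e \<tau> e"
    and n1: "e \<notin> pd_EE p \<tau> G" and n2: "tau_e \<tau> e \<notin> pd_EE p \<tau> G"
  shows "\<exists>H. is_step p \<tau> H G \<and> pd_quad p q \<tau> H = (pd_edges G - {e, tau_e \<tau> e}, pd_LL q G, pd_EE p \<tau> G)"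
proof -
  note g = pdD[OF S G]
  have ns: "{e} \<notin> eclasses G" using esingle_iff[OF S G e] te ne n1 n2 by auto
  have C: "{e, tau_e \<tau> e} \<in> eclasses G" using g_cls[OF g(4) g(5) g(8) e] ns by blast
  have ns2: "{tau_e \<tau> e} \<notin> eclasses G" using g_pair_nsingle(2)[where \<sigma>="tau_e \<tau>", OF g(4) C ne] .
  have tt: "tau_e \<tau> (tau_e \<tau> e) = e" using g(8) e by blast
  have "{x \<in> pd_EE p \<tau> G. x \<notin> {e, tau_e \<tau> e} \<and> tau_e \<tau> x \<notin> {e, tau_e \<tau> e}} = pd_EE p \<tau> G"
  proof (intro set_eqI iffI)
    fix x assume x: "x \<in> pd_EE p \<tau> G"
    have xf: "x \<in> pd_edges G" "{x} \<in> eclasses G" using EE_mem[OF S G] x by blast+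
    have a: "x \<noteq> e" "x \<noteq> tau_e \<tau> e" using xf ns ns2 by blast+
    have "tau_e \<tau> x \<noteq> e" using g(8) xf(1) a(2) by metis
    moreover have "tau_e \<tau> x \<noteq> tau_e \<tau> e" using g(8) xf(1) a(1) tt by metis
    ultimately show "x \<in> {x \<in> pd_EE p \<tau> G. x \<notin> {e, tau_e \<tau> e} \<and> tau_e \<tau> x \<notin> {e, tau_e \<tau> e}}" using x a by simp
  qed simp
  then have "pd_quad p q \<tau> (eremove G {e, tau_e \<tau> e}) = (pd_edges G - {e, tau_e \<tau> e}, pd_LL q G, pd_EE p \<tau> G)"
    using quad_eremove[OF C] by simp
  moreover have "is_step p \<tau> (eremove G {e, tau_e \<tau> e}) G" unfolding is_step_def using C by blast
  ultimately show ?thesis by blast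
qed

end

theorem proposition8:
  fixes p q :: nat and \<tau> :: "nat \<Rightarrow> nat" and G :: cgraph
  assumes hsetup: "pd_setup p q \<tau>"
    and G: "is_pdCG p \<tau> G"
  defines "E \<equiv> pd_edges G" and "LL \<equiv> pd_LL q G" and "EE \<equiv> pd_EE p \<tau> G"
  defines "Q \<equiv>
      {(E, LL - {i}, EE) | i. i \<in> LL}
    \<union> {(E, LL, EE - {e}) | e. e \<in> EE}
    \<union> {(E - {e}, LL, EE - {e}) | e. e \<in> EE}
    \<union> {(E - {tau_e \<tau> e}, LL, EE - {e}) | e. e \<in> EE}
    \<union> {(E - {e}, LL, EE) | e. e \<in> E \<and> tau_e \<tau> e \<notin> E}
    \<union> {(E - {(i, \<tau> i)}, LL, EE) | i. i \<in> {1..p} \<and> (i, \<tau> i) \<in> E}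
    \<union> {(E - {e, tau_e \<tau> e}, LL, EE) | e. e \<in> E \<and> tau_e \<tau> e \<in> E \<and> e \<noteq> tau_e \<tau> e
                                          \<and> e \<notin> EE \<and> tau_e \<tau> e \<notin> EE}"
  shows "{H. covered_by p \<tau> H G} = {H. is_pdCG p \<tau> H \<and> pd_quad p q \<tau> H \<in> Q}
         \<and> (\<forall>x\<in>Q. \<exists>H. is_pdCG p \<tau> H \<and> pd_quad p q \<tau> H = x)"
proof -
  have Qstep: "\<exists>H. is_step p \<tau> H G \<and> pd_quad p q \<tau> H = x" if x: "x \<in> Q" for x
  proof -
    from x consider (c1) i where "x = (E, LL - {i}, EE)" "i \<in> LL"
      | (c2) e where "x = (E, LL, EE - {e})" "e \<in> EE"
      | (c3) e where "x = (E - {e}, LL, EE - {e})" "e \<in> EE"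
      | (c4) e where "x = (E - {tau_e \<tau> e}, LL, EE - {e})" "e \<in> EE"
      | (c5) e where "x = (E - {e}, LL, EE)" "e \<in> E" "tau_e \<tau> e \<notin> E"
      | (c6) i where "x = (E - {(i, \<tau> i)}, LL, EE)" "i \<in> {1..p}" "(i, \<tau> i) \<in> E"
      | (c7) e where "x = (E - {e, tau_e \<tau> e}, LL, EE)" "e \<in> E" "tau_e \<tau> e \<in> E" "e \<noteq> tau_e \<tau> e"
          "e \<notin> EE" "tau_e \<tau> e \<notin> EE"
      unfolding Q_def by blast
    then show ?thesis
    proof cases
      case c1 then show ?thesis using qs1[OF hsetup G] unfolding E_def LL_def EE_def by blast
    next
      case c2 then show ?thesis using qs2[OF hsetup G] unfolding E_def LL_def EE_def by blast
    next
      case c3 then show ?thesis using qs3[OF hsetup G] unfolding E_def LL_def EE_def by blast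
    next
      case c4 then show ?thesis using qs4[OF hsetup G] unfolding E_def LL_def EE_def by blast
    next
      case c5 then show ?thesis using qs5[OF hsetup G] unfolding E_def LL_def EE_def by blast
    next
      case c6 then show ?thesis using qs6[OF hsetup G] unfolding E_def LL_def EE_def by blast
    next
      case c7 then show ?thesis using qs7[OF hsetup G] unfolding E_def LL_def EE_def by blast
    qed
  qed
  have stepQ: "pd_quad p q \<tau> H \<in> Q" if st: "is_step p \<tau> H G" for H
  proof -
    note d = step_quad[OF hsetup G st, folded E_def LL_def EE_def]
    show ?thesis unfolding Q_def using d by blast
  qed
  show ?thesis
  proof
    show "{H. covered_by p \<tau> H G} = {H. is_pdCG p \<tau> H \<and> pd_quad p q \<tau> H \<in> Q}"
    proof (intro set_eqI iffI)
      fix H assume "H \<in> {H. covered_by p \<tau> H G}"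
      then have "is_pdCG p \<tau> H \<and> is_step p \<tau> H G" using covered_iff[OF hsetup G] by blast
      then show "H \<in> {H. is_pdCG p \<tau> H \<and> pd_quad p q \<tau> H \<in> Q}" using stepQ by blast
    next
      fix H assume "H \<in> {H. is_pdCG p \<tau> H \<and> pd_quad p q \<tau> H \<in> Q}"
      then have a: "is_pdCG p \<tau> H" "pd_quad p q \<tau> H \<in> Q" by blast+
      then obtain H' where H': "is_step p \<tau> H' G" "pd_quad p q \<tau> H' = pd_quad p q \<tau> H" using Qstep by blast
      have "is_pdCG p \<tau> H'" using step_pd[OF hsetup G H'(1)] by blast
      then have "H' = H" using quad_inj[OF hsetup _ a(1) H'(2)] by blast
      then show "H \<in> {H. covered_by p \<tau> H G}" using covered_iff[OF hsetup G] a H'(1) by blast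
    qed
    show "\<forall>x\<in>Q. \<exists>H. is_pdCG p \<tau> H \<and> pd_quad p q \<tau> H = x"
    proof
      fix x assume "x \<in> Q"
      then obtain H where "is_step p \<tau> H G" "pd_quad p q \<tau> H = x" using Qstep by blast
      then show "\<exists>H. is_pdCG p \<tau> H \<and> pd_quad p q \<tau> H = x" using step_pd[OF hsetup G] by blast
    qed
  qed
qed


end
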